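(* Fix an integer $N\ge 1$. For real $\mu$, let $\ell^2_\mu\subset\mathbb{C}^\infty$ be the space of sequences $\mathbf u=(u_0,u_1,\dots)$ with norm $\|\mathbf u\|_{\ell^2_\mu}=\bigl(\sum_{k\ge0}|u_k|^2(k+1)^{2\mu}\bigr)^{1/2}<\infty$. Let $\mathcal L$ be the operator on Chebyshev coefficient sequences $$\mathcal L=\mathcal D_N+\sum_{\lambda=1}^{N-1}\mathcal S_{N-1}\cdots\mathcal S_\lambda\,\mathcal M_\lambda[a^\lambda]\,\mathcal D_\lambda+\mathcal S_{N-1}\cdots\mathcal S_0\,\mathcal M_0[a^0],$$ representing the $N$th order differential operator $u\mapsto u^{(N)}+\sum_{\lambda=0}^{N-1}a^\lambda(x)u^{(\lambda)}$ on $[-1,1]$ (leading coefficient $a^N\equiv1$), where the operators $\mathcal D_\lambda,\mathcal S_\lambda,\mathcal M_\lambda$ are as defined in the context. Let $\mathcal B$ be a linear operator from sequences to $\mathbb{C}^N$ (representing exactly $N$ boundary conditions in terms of Chebyshev coefficients), and let $D$ be an integer such that $\mathcal B:\ell^2_D\to\mathbb{C}^N$ is bounded. Let $$\mathcal R=\frac{1}{2^{N-1}(N-1)!}\,\mathrm{diag}\Bigl(\underbrace{1,\dots,1}_{N\text{ times}},\tfrac1N,\tfrac1{N+1},\tfrac1{N+2},\dots\Bigr).$$ Then $$\begin{pmatrix}\mathcal B\\ \mathcal L\end{pmatrix}\mathcal R=I+\mathcal K,$$ where $\mathcal K:\ell^2_\lambda\to\ell^2_\lambda$ is compact for every $\l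ambda\in\{D-1,D,D+1,\dots\}$.
   Context: Chebyshev polynomials are $T_k(x)=\cos(k\arccos x)$. For integers $\lambda\ge1$, the ultraspherical polynomials $C^{(\lambda)}_k$ are orthogonal on $[-1,1]$ with respect to the weight $(1-x^2)^{\lambda-1/2}$, normalized so that $C^{(\lambda)}_k(x)=\frac{2^k(\lambda)_k}{k!}x^k+O(x^{k-1})$ with $(\lambda)_k=\frac{(\lambda+k-1)!}{(\lambda-1)!}$; set $C^{(0)}_k:=T_k$ for convenience. All operators act on coefficient sequences indexed from $0$. The differentiation operator $\mathcal D_\lambda$ ($\lambda\ge1$) maps Chebyshev coefficients of $u$ to $C^{(\lambda)}$ coefficients of $u^{(\lambda)}$: $(\mathcal D_\lambda\mathbf u)_j=2^{\lambda-1}(\lambda-1)!\,(j+\lambda)\,u_{j+\lambda}$. The conversion operator $\mathcal S_0$ maps Chebyshev coefficients to $C^{(1)}$ coefficients: $(\mathcal S_0\mathbf u)_0=u_0-\tfrac12u_2$, $(\mathcal S_0\mathbf u)_j=\tfrac12(u_j-u_{j+2})$ for $j\ge1$. For $\lambda\ge1$, $\mathcal S_\lambda$ maps $C^{(\lambda)}$ coefficients to $C^{(\lambda+1)}$ coefficients: $(\mathcal S_\lambda\mathbf v)_j=\frac{\lambda}{\lambda+j}v_j-\frac{\lambda}{\lambda+j+2}v_{j+2}$. For a function $a$, $\mathcal M_\lambda[a]$ ($\lambda\ge0$) is the operator mapping the $C^{(\lambda)}$ coefficients of a function $v$ to the $C^{(\lambda)}$ coefficients of the product $a v$. $\begin{pmatrix}\mathcal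 B\\ \mathcal L\end{pmatrix}$ denotes the operator whose output is the $N$ entries of $\mathcal B\mathbf u$ followed by the sequence $\mathcal L\mathbf u$. Standing assumption: the coefficient functions $a^0,\dots,a^{N-1}$ are sufficiently smooth (in practice replaced by finite truncated expansions) so that each $\mathcal M_\lambda[a^\lambda]$ is a bounded operator on every $\ell^2_\mu$. *)

theory Defs
  imports "HOL-Analysis.Analysis" "HOL-Computational_Algebra.Polynomial"
begin

type_synonym cseq = "nat \<Rightarrow> complex"

definition in_l2 :: "real \<Rightarrow> cseq \<Rightarrow> bool" where
  "in_l2 mu u \<longleftrightarrow> summable (\<lambda>k. (cmod (u k))^2 * (real k + 1) powr (2 * mu))"

definition l2norm :: "real \<Rightarrow> cseq \<Rightarrow> real" where
  "l2norm mu u = sqrt (\<Sum>k. (cmod (u k))^2 * (real k + 1) powr (2 * mu))"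

definition cheb :: "nat \<Rightarrow> real poly" where
  "cheb k = (THE p. \<forall>x\<in>{-1..1}. poly p x = cos (real k * arccos x))"

definition ultra_cond :: "nat \<Rightarrow> nat \<Rightarrow> real poly \<Rightarrow> bool" where
  "ultra_cond lam k p \<longleftrightarrow>
     degree p = k \<and> coeff p k = 2 ^ k * pochhammer (real lam) k / fact k \<and>
     (\<forall>q :: real poly. degree q < k \<longrightarrow>
        integral {-1..1} (\<lambda>x. poly p x * poly q x * (1 - x^2) powr (real lam - 1/2)) = 0)"

definition ultra :: "nat \<Rightarrow> nat \<Rightarrow> real poly" where
  "ultra lam k = (if lam = 0 then cheb k else (THE p. ultra_cond lam k p))"

definition ultraC :: "nat \<Rightarrow> nat \<Rightarrow> complex poly" where
  "ultraC lam k = map_poly complex_of_real (ultra lam k)"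

definition gcoef :: "nat \<Rightarrow> complex poly \<Rightarrow> nat \<Rightarrow> complex" where
  "gcoef lam p = (THE c. (\<forall>i > degree p. c i = 0) \<and>
                          p = (\<Sum>i\<le>degree p. smult (c i) (ultraC lam i)))"

definition Dop :: "nat \<Rightarrow> cseq \<Rightarrow> cseq" where
  "Dop lam u j = of_real (2 ^ (lam - 1) * fact (lam - 1) * real (j + lam)) * u (j + lam)"

definition Sop :: "nat \<Rightarrow> cseq \<Rightarrow> cseq" where
  "Sop lam v j =
     (if lam = 0 then
        (if j = 0 then v 0 - v 2 / 2 else (v j - v (j + 2)) / 2)
      else of_real (real lam / real (lam + j)) * v j
           - of_real (real lam / real (lam + j + 2)) * v (j + 2))"

text \<open>Schain lo n = S_(lo+n-1) o ... o S_lo  (identity for n = 0).\<close>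
fun Schain :: "nat \<Rightarrow> nat \<Rightarrow> cseq \<Rightarrow> cseq" where
  "Schain lo 0 = id"
| "Schain lo (Suc n) = Sop (lo + n) \<circ> Schain lo n"

text \<open>Multiplication operator M_lam[a]: C^(lam) coefficients of v to those of a*v.\<close>
definition Mop :: "nat \<Rightarrow> complex poly \<Rightarrow> cseq \<Rightarrow> cseq" where
  "Mop lam a v j = (\<Sum>k. gcoef lam (a * ultraC lam k) j * v k)"

definition Lop :: "nat \<Rightarrow> (nat \<Rightarrow> complex poly) \<Rightarrow> cseq \<Rightarrow> cseq" where
  "Lop N a u j =
     Dop N u j
     + (\<Sum>lam\<in>{1..N-1}. Schain lam (N - lam) (Mop lam (a lam) (Dop lam u)) j)
     + Schain 0 N (Mop 0 (a 0) u) j"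

definition blockop :: "nat \<Rightarrow> (cseq \<Rightarrow> cseq) \<Rightarrow> (cseq \<Rightarrow> cseq) \<Rightarrow> cseq \<Rightarrow> cseq" where
  "blockop N B L u j = (if j < N then B u j else L u (j - N))"

definition Rop :: "nat \<Rightarrow> cseq \<Rightarrow> cseq" where
  "Rop N u j = of_real (1 / (2 ^ (N - 1) * fact (N - 1))) *
               (if j < N then u j else u j / of_nat j)"

definition compact_op_l2 :: "real \<Rightarrow> (cseq \<Rightarrow> cseq) \<Rightarrow> bool" where
  "compact_op_l2 mu K \<longleftrightarrow>
     (\<forall>u. in_l2 mu u \<longrightarrow> in_l2 mu (K u)) \<and>
     (\<forall>u v c. in_l2 mu u \<longrightarrow> in_l2 mu v \<longrightarrow> K (\<lambda>k. c * u k + v k) = (\<lambda>k. c * K u k + K v k)) \<and>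
     (\<forall>us :: nat \<Rightarrow> cseq. (\<forall>n. in_l2 mu (us n)) \<longrightarrow> bounded (range (\<lambda>n. l2norm mu (us n))) \<longrightarrow>
        (\<exists>r w. strict_mono r \<and> in_l2 mu w \<and>
               (\<lambda>n. l2norm mu (\<lambda>k. K (us (r n)) k - w k)) \<longlonglongrightarrow> 0))"

end

theory Submission
  imports Defs "HOL-Library.Diagonal_Subsequence"
begin


fun Tch :: "nat \<Rightarrow> real poly" where
  "Tch 0 = 1"
| "Tch (Suc 0) = [:0, 1:]"
| "Tch (Suc (Suc n)) = smult 2 (pCons 0 (Tch (Suc n))) - Tch n"

lemma Tch_cos: "poly (Tch n) (cos t) = cos (real n * t)"
proof (induction n rule: Tch.induct)
  case (3 n)
  have "cos (real (Suc (Suc n)) * t) = 2 * cos t * cos (real (Suc n) * t) - cos (real n * t)"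
  proof -
    have "cos (real (Suc (Suc n)) * t) = cos (real (Suc n) * t + t)" by (simp add: algebra_simps)
    moreover have "cos (real n * t) = cos (real (Suc n) * t - t)" by (simp add: algebra_simps)
    ultimately show ?thesis by (simp add: cos_add cos_diff)
  qed
  with 3 show ?case by simp
qed auto

lemma Tch_deg: "degree (Tch n) = n \<and> coeff (Tch n) n = (if n = 0 then 1 else 2 ^ (n - 1))"
proof (induction n rule: Tch.induct)
  case (3 n)
  have nz: "Tch (Suc n) \<noteq> 0" using 3 by (metis coeff_0 power_not_zero zero_neq_numeral nat.distinct(1))
  have d1: "degree (smult 2 (pCons 0 (Tch (Suc n)))) = Suc (Suc n)"
    using 3 nz by simp
  have "degree (smult 2 (pCons 0 (Tch (Suc n))) - Tch n) = Suc (Suc n)"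
    using d1 3 by (metis degree_add_eq_left diff_conv_add_uminus degree_minus lessI less_SucI)
  moreover have "coeff (Tch n) (Suc (Suc n)) = 0" using 3 by (simp add: coeff_eq_0)
  ultimately show ?case using 3 by auto
qed auto

lemma Tch_nz: "coeff (Tch n) n \<noteq> 0" using Tch_deg[of n] by auto

lemma cheb_eq: "cheb n = Tch n"
  unfolding cheb_def
proof (rule the_equality)
  show "\<forall>x\<in>{-1..1}. poly (Tch n) x = cos (real n * arccos x)"
  proof
    fix x :: real assume x: "x \<in> {-1..1}"
    show "poly (Tch n) x = cos (real n * arccos x)"
    proof -
      have "cos (arccos x) = x" using x by (intro cos_arccos) auto
      thus ?thesis using Tch_cos[of n "arccos x"] by simp
    qed
  qed
next
  fix p assume h: "\<forall>x\<in>{- 1..1::real}. poly p x = cos (real n * arccos x)"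
  have "{-1..1::real} \<subseteq> {x. poly (p - Tch n) x = 0}"
  proof
    fix x :: real assume x: "x \<in> {-1..1}"
    have "poly p x = cos (real n * arccos x)" using h x by blast
    moreover have "poly (Tch n) x = cos (real n * arccos x)"
    proof -
      have "cos (arccos x) = x" using x by (intro cos_arccos) auto
      thus ?thesis using Tch_cos[of n "arccos x"] by simp
    qed
    ultimately show "x \<in> {x. poly (p - Tch n) x = 0}" by simp
  qed
  moreover have "infinite {-1..1::real}" by (rule infinite_Icc) simp
  ultimately have "infinite {x. poly (p - Tch n) x = 0}" using finite_subset by blast
  hence "p - Tch n = 0" using poly_roots_finite by blast
  thus "p = Tch n" by simp
qed

lemma Tch_x: "pCons 0 (Tch k) = smult (if k = 0 then 1 else 1/2) (Tch (Suc k)) + smult (if k = 0 then 0 else 1/2) (Tch (k - 1))"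
proof (cases k)
  case 0 then show ?thesis by simp
next
  case (Suc n)
  then show ?thesis by (simp add: smult_diff_right)
qed


fun Geg :: "nat \<Rightarrow> nat \<Rightarrow> real poly" where
  "Geg l 0 = 1"
| "Geg l (Suc 0) = [:0, 2 * real l:]"
| "Geg l (Suc (Suc n)) = smult (1 / (real n + 2))
     (smult (2 * (real n + 1 + real l)) (pCons 0 (Geg l (Suc n))) - smult (real n + 2 * real l) (Geg l n))"

lemma Geg_rec: "(real n + 2) * poly (Geg l (Suc (Suc n))) x =
   2 * (real n + 1 + real l) * x * poly (Geg l (Suc n)) x - (real n + 2 * real l) * poly (Geg l n) x"
  by (simp add: field_simps)

lemma Geg_drec: "(real n + 2) * poly (pderiv (Geg l (Suc (Suc n)))) x =
   2 * (real n + 1 + real l) * (poly (Geg l (Suc n)) x + x * poly (pderiv (Geg l (Suc n))) x)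
   - (real n + 2 * real l) * poly (pderiv (Geg l n)) x"
  by (simp add: pderiv_diff pderiv_smult pderiv_pCons field_simps)

lemma step_alg:
  fixes k l x A Bn C Dd d1 d2 d3 :: real
  assumes IH1: "(1 - x^2) * d1 = - k * x * A + (k - 1 + 2*l) * Bn"
    and IH2: "(1 - x^2) * d2 = -(k+1) * x * C + (k + 2*l) * A"
    and R1: "(k+1) * C = 2*(k+l)*x*A - (k - 1 + 2*l) * Bn"
    and R2: "(k+2) * Dd = 2*(k+1+l)*x*C - (k+2*l)*A"
    and D2: "(k+2) * d3 = 2*(k+1+l)*(C + x*d2) - (k+2*l)*d1"
    and k: "k \<ge> 0"
  shows "(1 - x^2) * d3 = -(k+2) * x * Dd + (k + 1 + 2*l) * C"
proof -
  have R1': "(k - 1 + 2*l) * Bn = 2*(k+l)*x*A - (k+1) * C" using R1 by simp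
  have "(k+2) * ((1 - x^2) * d3) = (1 - x^2) * ((k+2) * d3)" by simp
  also have "\<dots> = 2*(k+1+l)*(1 - x^2)*C + 2*(k+1+l)*x*((1 - x^2)*d2) - (k+2*l)*((1 - x^2)*d1)"
    unfolding D2 by (simp add: algebra_simps)
  also have "\<dots> = 2*(k+1+l)*(1 - x^2)*C + 2*(k+1+l)*x*(-(k+1) * x * C + (k + 2*l) * A)
        - (k+2*l)*(- k * x * A) - (k+2*l)*((k - 1 + 2*l) * Bn)"
    unfolding IH1 IH2 by (simp add: algebra_simps)
  also have "\<dots> = 2*(k+1+l)*(1 - x^2)*C + 2*(k+1+l)*x*(-(k+1) * x * C + (k + 2*l) * A)
        - (k+2*l)*(- k * x * A) - (k+2*l)*(2*(k+l)*x*A - (k+1) * C)"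
    using R1' by (simp only:)
  also have "\<dots> = -(k+2)*x*(2*(k+1+l)*x*C - (k+2*l)*A) + (k+2)*(k+1+2*l)*C"
    by (simp add: algebra_simps power2_eq_square)
  also have "\<dots> = -(k+2)*x*((k+2)*Dd) + (k+2)*(k+1+2*l)*C" unfolding R2 by simp
  also have "\<dots> = (k+2) * (-(k+2) * x * Dd + (k + 1 + 2*l) * C)" by (simp add: algebra_simps)
  finally show ?thesis using k by simp
qed

lemma Geg_B: "(1 - x^2) * poly (pderiv (Geg l (Suc n))) x =
   - (real n + 1) * x * poly (Geg l (Suc n)) x + (real n + 2 * real l) * poly (Geg l n) x
 \<and> (1 - x^2) * poly (pderiv (Geg l (Suc (Suc n)))) x =
   - (real n + 2) * x * poly (Geg l (Suc (Suc n))) x + (real n + 1 + 2 * real l) * poly (Geg l (Suc n)) x"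
proof (induction n arbitrary: x)
  case 0
  show ?case by (simp add: pderiv_pCons pderiv_diff pderiv_smult field_simps power2_eq_square)
next
  case (Suc n)
  define k where "k = real n + 1"
  have IH1: "(1 - x^2) * poly (pderiv (Geg l (Suc n))) x =
   - k * x * poly (Geg l (Suc n)) x + (k - 1 + 2 * real l) * poly (Geg l n) x"
    using Suc[of x] by (simp add: k_def)
  have IH2: "(1 - x^2) * poly (pderiv (Geg l (Suc (Suc n)))) x =
   - (k+1) * x * poly (Geg l (Suc (Suc n))) x + (k + 2 * real l) * poly (Geg l (Suc n)) x"
    using Suc[of x] by (simp add: k_def algebra_simps)
  have R1: "(k + 1) * poly (Geg l (Suc (Suc n))) x =
   2 * (k + real l) * x * poly (Geg l (Suc n)) x - (k - 1 + 2 * real l) * poly (Geg l n) x"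
    using Geg_rec[of n l x] by (simp add: k_def algebra_simps)
  have R2: "(k + 2) * poly (Geg l (Suc (Suc (Suc n)))) x =
   2 * (k + 1 + real l) * x * poly (Geg l (Suc (Suc n))) x - (k + 2 * real l) * poly (Geg l (Suc n)) x"
    using Geg_rec[of "Suc n" l x] by (simp add: k_def algebra_simps)
  have D2: "(k + 2) * poly (pderiv (Geg l (Suc (Suc (Suc n))))) x =
   2 * (k + 1 + real l) * (poly (Geg l (Suc (Suc n))) x + x * poly (pderiv (Geg l (Suc (Suc n)))) x)
   - (k + 2 * real l) * poly (pderiv (Geg l (Suc n))) x"
    using Geg_drec[of "Suc n" l x] by (simp add: k_def algebra_simps)
  have "(1 - x^2) * poly (pderiv (Geg l (Suc (Suc (Suc n))))) x =
         - (k + 2) * x * poly (Geg l (Suc (Suc (Suc n)))) x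
         + (k + 1 + 2 * real l) * poly (Geg l (Suc (Suc n))) x"
    by (rule step_alg[OF IH1 IH2 R1 R2 D2]) (simp add: k_def)
  then show ?case using IH2 by (simp add: k_def algebra_simps)
qed


lemma ode_alg:
  fixes x dk d2k dm gk gm m l :: real
  assumes H1: "-2*x*dk + (1-x^2)*d2k = -(m+1)*(gk + x*dk) + (m+2*l)*dm"
    and H2: "(1-x^2)*dm = (m+2*l)*x*gm - (m+1)*gk"
    and H3: "(1-x^2)*dk = -(m+1)*x*gk + (m+2*l)*gm"
  shows "(1-x^2)*((1-x^2)*d2k - (2*l+1)*x*dk + (m+1)*(m+1+2*l)*gk) = 0"
proof -
  have e1: "(1-x^2)*d2k = 2*x*dk - (m+1)*(gk + x*dk) + (m+2*l)*dm" using H1 by (simp add: algebra_simps)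
  have "(1-x^2)*((1-x^2)*d2k - (2*l+1)*x*dk + (m+1)*(m+1+2*l)*gk)
     = (1-x^2)*((1-x^2)*d2k) - (2*l+1)*x*((1-x^2)*dk) + (m+1)*(m+1+2*l)*(1-x^2)*gk"
    by (simp add: algebra_simps)
  also have "\<dots> = (1-x^2)*(2*x*dk - (m+1)*(gk + x*dk) + (m+2*l)*dm) - (2*l+1)*x*((1-x^2)*dk) + (m+1)*(m+1+2*l)*(1-x^2)*gk"
    unfolding e1 ..
  also have "\<dots> = 2*x*((1-x^2)*dk) - (m+1)*(1-x^2)*gk - (m+1)*x*((1-x^2)*dk) + (m+2*l)*((1-x^2)*dm)
      - (2*l+1)*x*((1-x^2)*dk) + (m+1)*(m+1+2*l)*(1-x^2)*gk"
    by (simp add: algebra_simps)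
  also have "\<dots> = 2*x*(-(m+1)*x*gk + (m+2*l)*gm) - (m+1)*(1-x^2)*gk - (m+1)*x*(-(m+1)*x*gk + (m+2*l)*gm)
      + (m+2*l)*((m+2*l)*x*gm - (m+1)*gk)
      - (2*l+1)*x*(-(m+1)*x*gk + (m+2*l)*gm) + (m+1)*(m+1+2*l)*(1-x^2)*gk"
    unfolding H2 H3 ..
  also have "\<dots> = 0" by (simp add: algebra_simps power2_eq_square)
  finally show ?thesis .
qed

lemma poly_quad: "poly [:1, 0, -1:] x = 1 - (x::real)^2"
  by (simp add: power2_eq_square)

lemma Geg_Z:
  fixes l m :: nat and x :: real
  defines "G \<equiv> Geg l (Suc m)"
  shows "(1-x^2)*((1-x^2)*poly (pderiv (pderiv G)) x - (2*real l+1)*x*poly (pderiv G) x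
     + (real m+1)*(real m+1+2*real l)*poly G x) = 0"
proof -
  have B: "(1 - y^2) * poly (pderiv G) y =
     - (real m + 1) * y * poly G y + (real m + 2 * real l) * poly (Geg l m) y" for y
    using Geg_B[of y l m] by (simp add: G_def)
  have peq: "[:1, 0, -1:] * pderiv G = smult (- (real m + 1)) (pCons 0 G) + smult (real m + 2 * real l) (Geg l m)"
  proof (rule poly_eq_poly_eq_iff[THEN iffD1], rule ext)
    fix y
    have "poly ([:1, 0, -1:] * pderiv G) y = (1 - y^2) * poly (pderiv G) y" by (simp only: poly_mult poly_quad)
    also have "\<dots> = - (real m + 1) * y * poly G y + (real m + 2 * real l) * poly (Geg l m) y" by (rule B)
    also have "\<dots> = poly (smult (- (real m + 1)) (pCons 0 G) + smult (real m + 2 * real l) (Geg l m)) y"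
      by (simp add: algebra_simps)
    finally show "poly ([:1, 0, -1:] * pderiv G) y = poly (smult (- (real m + 1)) (pCons 0 G) + smult (real m + 2 * real l) (Geg l m)) y" .
  qed
  have "poly (pderiv ([:1, 0, -1:] * pderiv G)) x = poly (pderiv (smult (- (real m + 1)) (pCons 0 G) + smult (real m + 2 * real l) (Geg l m))) x"
    by (simp only: peq)
  hence "poly ([:1, 0, -1:] * pderiv (pderiv G) + pderiv G * pderiv [:1, 0, -1:]) x =
     poly (smult (- (real m + 1)) (pderiv (pCons 0 G)) + smult (real m + 2 * real l) (pderiv (Geg l m))) x"
    by (simp only: pderiv_mult pderiv_add pderiv_smult)
  moreover have "pderiv [:1, 0, -1::real:] = [:0, -2:]" by (simp add: pderiv_pCons)
  ultimately have H1: "-2*x*poly (pderiv G) x + (1-x^2)*poly (pderiv (pderiv G)) x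
      = -(real m+1)*(poly G x + x*poly (pderiv G) x) + (real m+2*real l)*poly (pderiv (Geg l m)) x"
    by (simp add: pderiv_pCons algebra_simps power2_eq_square)
  have H2: "(1-x^2)*poly (pderiv (Geg l m)) x = (real m+2*real l)*x*poly (Geg l m) x - (real m+1)*poly G x"
  proof (cases m)
    case 0 then show ?thesis by (simp add: G_def)
  next
    case (Suc m')
    have b: "(1 - x^2) * poly (pderiv (Geg l (Suc m'))) x =
      - (real m' + 1) * x * poly (Geg l (Suc m')) x + (real m' + 2 * real l) * poly (Geg l m') x"
      using Geg_B[of x l m'] by simp
    have r: "(real m' + 2) * poly (Geg l (Suc (Suc m'))) x =
      2 * (real m' + 1 + real l) * x * poly (Geg l (Suc m')) x - (real m' + 2 * real l) * poly (Geg l m') x"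
      by (rule Geg_rec)
    have r': "(real m' + 2 * real l) * poly (Geg l m') x = 2 * (real m' + 1 + real l) * x * poly (Geg l (Suc m')) x
       - (real m' + 2) * poly (Geg l (Suc (Suc m'))) x" using r by simp
    show ?thesis unfolding Suc G_def using b r' by (simp add: algebra_simps)
  qed
  have H3: "(1-x^2)*poly (pderiv G) x = -(real m+1)*x*poly G x + (real m+2*real l)*poly (Geg l m) x"
    using B[of x] by simp
  show ?thesis by (rule ode_alg[OF H1 H2 H3])
qed

lemma Geg_ODE_pt:
  "(1 - x^2) * poly (pderiv (pderiv (Geg l k))) x - (2 * real l + 1) * x * poly (pderiv (Geg l k)) x
     + real k * (real k + 2 * real l) * poly (Geg l k) x = 0"
proof (cases k)
  case 0 then show ?thesis by simp
next
  case (Suc m)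
  define G where "G = Geg l (Suc m)"
  have Z: "(1-y^2)*((1-y^2)*poly (pderiv (pderiv G)) y - (2*real l+1)*y*poly (pderiv G) y
     + (real m+1)*(real m+1+2*real l)*poly G y) = 0" for y
    unfolding G_def by (rule Geg_Z)
  define E where "E = [:1, 0, -1:] * pderiv (pderiv G) - smult (2*real l+1) (pCons 0 (pderiv G))
     + smult ((real m+1)*(real m+1+2*real l)) G"
  have pE: "poly E y = (1-y^2)*poly (pderiv (pderiv G)) y - (2*real l+1)*y*poly (pderiv G) y
     + (real m+1)*(real m+1+2*real l)*poly G y" for y
    by (simp add: E_def poly_quad algebra_simps power2_eq_square)
  have "[:1, 0, -1:] * E = 0"
    by (rule poly_eq_poly_eq_iff[THEN iffD1], rule ext) (simp only: poly_mult poly_quad pE Z poly_0)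
  hence "E = 0" by (subst (asm) mult_eq_0_iff) simp
  hence "poly E x = 0" by simp
  thus ?thesis unfolding pE Suc G_def by (simp add: algebra_simps)
qed


definition Wt :: "nat \<Rightarrow> real \<Rightarrow> real" where
  "Wt l x = (1 - x^2) powr (real l - 1/2)"

definition Aop :: "nat \<Rightarrow> real poly \<Rightarrow> real \<Rightarrow> real" where
  "Aop l f x = (1 - x^2) * poly (pderiv (pderiv f)) x - (2 * real l + 1) * x * poly (pderiv f) x"

lemma one_minus_sq_nonneg: "-1 \<le> x \<Longrightarrow> x \<le> 1 \<Longrightarrow> 0 \<le> 1 - (x::real)^2"
proof -
  assume "-1 \<le> x" "x \<le> 1"
  hence "0 \<le> (1 - x) * (1 + x)" by (intro mult_nonneg_nonneg) auto
  thus ?thesis by (simp add: algebra_simps power2_eq_square)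
qed

lemma one_minus_sq_pos: "-1 < x \<Longrightarrow> x < 1 \<Longrightarrow> 0 < 1 - (x::real)^2"
proof -
  assume "-1 < x" "x < 1"
  hence "0 < (1 - x) * (1 + x)" by (intro mult_pos_pos) auto
  thus ?thesis by (simp add: algebra_simps power2_eq_square)
qed

lemma cont_powr_quad: "0 < r \<Longrightarrow> continuous_on {-1..1} (\<lambda>x::real. (1 - x^2) powr r)"
  by (rule continuous_on_powr') (auto intro!: continuous_intros simp: abs_square_le_1)

lemma Wt_cont: "l \<ge> 1 \<Longrightarrow> continuous_on {-1..1} (Wt l)"
  unfolding Wt_def[abs_def] by (rule cont_powr_quad) simp

lemma symm:
  assumes l: "l \<ge> 1"
  shows "((\<lambda>x. Wt l x * (Aop l f x * poly g x - poly f x * Aop l g x)) has_integral 0) {-1..1}"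
proof -
  define H where "H x = (1 - x^2) powr (real l + 1/2) *
       (poly (pderiv f) x * poly g x - poly f x * poly (pderiv g) x)" for x
  have cont: "continuous_on {-1..1} H" unfolding H_def[abs_def]
    by (intro continuous_intros cont_powr_quad) simp
  have der: "(H has_vector_derivative (Wt l x * (Aop l f x * poly g x - poly f x * Aop l g x))) (at x)"
    if x: "x \<in> {-1<..<1}" for x
  proof -
    have pos: "0 < 1 - x^2" using x one_minus_sq_pos by auto
    have dq: "((\<lambda>x. 1 - x^2) has_real_derivative (-2*x)) (at x)"
      by (auto intro!: derivative_eq_intros)
    have d1: "((\<lambda>x. (1 - x^2) powr (real l + 1/2)) has_real_derivative
        (real l + 1/2) * (1 - x^2) powr (real l + 1/2 - of_nat 1) * (-2*x)) (at x)"
      by (rule DERIV_fun_powr[OF dq pos])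
    have d2: "((\<lambda>x. poly (pderiv f) x * poly g x - poly f x * poly (pderiv g) x) has_real_derivative
       (poly (pderiv (pderiv f)) x * poly g x + poly (pderiv g) x * poly (pderiv f) x)
       - (poly (pderiv f) x * poly (pderiv g) x + poly (pderiv (pderiv g)) x * poly f x)) (at x)"
      by (intro DERIV_diff DERIV_mult poly_DERIV)
    have d: "(H has_real_derivative
       (real l + 1/2) * (1 - x^2) powr (real l + 1/2 - of_nat 1) * (-2*x) *
         (poly (pderiv f) x * poly g x - poly f x * poly (pderiv g) x)
       + ((poly (pderiv (pderiv f)) x * poly g x + poly (pderiv g) x * poly (pderiv f) x)
       - (poly (pderiv f) x * poly (pderiv g) x + poly (pderiv (pderiv g)) x * poly f x)) * (1 - x^2) powr (real l + 1/2)) (at x)"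
      unfolding H_def[abs_def] by (rule DERIV_mult[OF d1 d2])
    have e1: "(1 - x^2) powr (real l + 1/2 - of_nat 1) = Wt l x"
      unfolding Wt_def by (simp add: algebra_simps)
    have e2: "(1 - x^2) powr (real l + 1/2) = (1 - x^2) * Wt l x"
    proof -
      have "(1 - x^2) powr (real l + 1/2) = (1 - x^2) powr (1 + (real l - 1/2))" by (simp add: algebra_simps)
      also have "\<dots> = (1 - x^2) powr 1 * (1 - x^2) powr (real l - 1/2)" by (rule powr_add)
      also have "\<dots> = (1 - x^2) * Wt l x" using pos by (simp add: Wt_def powr_one)
      finally show ?thesis .
    qed
    have "(H has_real_derivative (Wt l x * (Aop l f x * poly g x - poly f x * Aop l g x))) (at x)"
      using d unfolding e1 e2 by (simp add: Aop_def algebra_simps)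
    thus ?thesis by (simp add: has_real_derivative_iff_has_vector_derivative)
  qed
  have "((\<lambda>x. Wt l x * (Aop l f x * poly g x - poly f x * Aop l g x)) has_integral (H 1 - H (-1))) {-1..1}"
    by (rule fundamental_theorem_of_calculus_interior[OF _ cont der]) auto
  moreover have "H 1 = 0" "H (-1) = 0" unfolding H_def by simp_all
  ultimately show ?thesis by simp
qed


lemma Aop_Geg: "Aop l (Geg l k) x = - (real k * (real k + 2*real l)) * poly (Geg l k) x"
  using Geg_ODE_pt[of x l k] unfolding Aop_def by (simp add: algebra_simps)

lemma Aop_monom: "Aop l (monom 1 m) x = real m * (real m - 1) * x^(m-2) - real m * (real m + 2 * real l) * x^m"
proof (cases m)
  case 0 then show ?thesis by (simp add: Aop_def pderiv_monom)
next
  case (Suc m1) note m1 = this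
  show ?thesis
  proof (cases m1)
    case 0 then show ?thesis using m1 by (simp add: Aop_def pderiv_monom poly_monom algebra_simps)
  next
    case (Suc m2)
    then show ?thesis using m1
      by (simp add: Aop_def pderiv_monom poly_monom algebra_simps power2_eq_square)
  qed
qed

lemma intg: "l \<ge> 1 \<Longrightarrow> (\<lambda>x. Wt l x * (poly p x * x^m)) integrable_on {-1..1}"
  by (intro integrable_continuous_interval continuous_intros Wt_cont)

definition Ik :: "nat \<Rightarrow> nat \<Rightarrow> nat \<Rightarrow> real" where
  "Ik l k m = integral {-1..1} (\<lambda>x. Wt l x * (poly (Geg l k) x * x^m))"

lemma Ik_rel:
  assumes l: "l \<ge> 1"
  shows "(real m * (real m + 2*real l) - real k * (real k + 2*real l)) * Ik l k m
          - real m * (real m - 1) * Ik l k (m-2) = 0"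
proof -
  define c1 where "c1 = real m * (real m + 2*real l) - real k * (real k + 2*real l)"
  define c2 where "c2 = real m * (real m - 1)"
  have eq: "Wt l x * (Aop l (Geg l k) x * poly (monom 1 m) x - poly (Geg l k) x * Aop l (monom 1 m) x)
     = c1 * (Wt l x * (poly (Geg l k) x * x^m)) - c2 * (Wt l x * (poly (Geg l k) x * x^(m-2)))" for x
    unfolding Aop_Geg Aop_monom c1_def c2_def by (simp add: poly_monom algebra_simps)
  have "((\<lambda>x. c1 * (Wt l x * (poly (Geg l k) x * x^m)) - c2 * (Wt l x * (poly (Geg l k) x * x^(m-2))))
      has_integral (c1 * Ik l k m - c2 * Ik l k (m-2))) {-1..1}"
    unfolding Ik_def by (intro has_integral_diff has_integral_mult_right integrable_integral intg l)
  moreover have "((\<lambda>x. c1 * (Wt l x * (poly (Geg l k) x * x^m)) - c2 * (Wt l x * (poly (Geg l k) x * x^(m-2))))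
      has_integral 0) {-1..1}"
    using symm[OF l, of "Geg l k" "monom 1 m"] unfolding eq .
  ultimately show ?thesis unfolding c1_def[symmetric] c2_def[symmetric] by (rule has_integral_unique)
qed

lemma orth: "l \<ge> 1 \<Longrightarrow> m < k \<Longrightarrow> Ik l k m = 0"
proof (induction m rule: less_induct)
  case (less m)
  have r: "(real m * (real m + 2*real l) - real k * (real k + 2*real l)) * Ik l k m
          - real m * (real m - 1) * Ik l k (m-2) = 0" by (rule Ik_rel[OF less.prems(1)])
  have z: "real m * (real m - 1) * Ik l k (m-2) = 0"
  proof (cases "m \<ge> 2")
    case True then show ?thesis using less.IH[of "m-2"] less.prems by simp
  next
    case False then have "m = 0 \<or> m = 1" by auto
    then show ?thesis by auto
  qed
  have lt: "real m * (real m + 2*real l) < real k * (real k + 2*real l)"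
    using less.prems by (intro mult_strict_mono) auto
  from r z lt show ?case by simp
qed

lemma Geg_deg: "l \<ge> 1 \<Longrightarrow> degree (Geg l k) = k \<and> coeff (Geg l k) k = 2^k * pochhammer (real l) k / fact k"
proof (induction l k rule: Geg.induct)
  case (1 l) then show ?case by simp
next
  case (2 l) then show ?case by simp
next
  case (3 l n)
  from 3 have IH1: "degree (Geg l (Suc n)) = Suc n" and IH1c: "coeff (Geg l (Suc n)) (Suc n) = 2^(Suc n) * pochhammer (real l) (Suc n) / fact (Suc n)"
    and IH0: "degree (Geg l n) = n" by auto
  have pp: "0 < pochhammer (real l) (Suc n)" using 3 by (intro pochhammer_pos) simp
  have nz: "Geg l (Suc n) \<noteq> 0" using IH1c pp by auto
  have d1: "degree (smult (2 * (real n + 1 + real l)) (pCons 0 (Geg l (Suc n)))) = Suc (Suc n)"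
    using IH1 nz by simp
  have d2: "degree (smult (real n + 2 * real l) (Geg l n)) < Suc (Suc n)"
    using IH0 by (metis degree_smult_le le_less_trans lessI less_SucI)
  have dd: "degree (smult (2 * (real n + 1 + real l)) (pCons 0 (Geg l (Suc n))) - smult (real n + 2 * real l) (Geg l n)) = Suc (Suc n)"
    using d1 d2 by (metis degree_add_eq_left diff_conv_add_uminus degree_minus)
  have c0: "coeff (Geg l n) (Suc (Suc n)) = 0" using IH0 by (simp add: coeff_eq_0)
  have "coeff (Geg l (Suc (Suc n))) (Suc (Suc n)) =
     1 / (real n + 2) * (2 * (real n + 1 + real l) * (2^(Suc n) * pochhammer (real l) (Suc n) / fact (Suc n)))"
    using IH1c c0 by simp
  also have "\<dots> = 2^(Suc (Suc n)) * pochhammer (real l) (Suc (Suc n)) / fact (Suc (Suc n))"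
    by (simp add: pochhammer_Suc field_simps)
  finally show ?case using dd by simp
qed

lemma ultra_cond_Geg:
  assumes l: "l \<ge> 1"
  shows "ultra_cond l k (Geg l k)"
  unfolding ultra_cond_def
proof (intro conjI allI impI)
  show "degree (Geg l k) = k" using Geg_deg[OF l] by simp
  show "coeff (Geg l k) k = 2 ^ k * pochhammer (real l) k / fact k" using Geg_deg[OF l] by simp
  fix q :: "real poly" assume q: "degree q < k"
  have "((\<lambda>x. \<Sum>i\<le>degree q. coeff q i * (Wt l x * (poly (Geg l k) x * x^i))) has_integral
        (\<Sum>i\<le>degree q. coeff q i * Ik l k i)) {-1..1}"
    unfolding Ik_def by (intro has_integral_sum has_integral_mult_right integrable_integral intg l) auto
  moreover have "(\<Sum>i\<le>degree q. coeff q i * Ik l k i) = 0"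
    using q by (intro sum.neutral) (auto simp: orth[OF l])
  moreover have "(\<lambda>x. \<Sum>i\<le>degree q. coeff q i * (Wt l x * (poly (Geg l k) x * x^i))) =
     (\<lambda>x. poly (Geg l k) x * poly q x * (1 - x^2) powr (real l - 1/2))"
    by (rule ext) (subst poly_altdef[of q], simp add: sum_distrib_left sum_distrib_right Wt_def mult_ac)
  ultimately show "integral {-1..1} (\<lambda>x. poly (Geg l k) x * poly q x * (1 - x^2) powr (real l - 1/2)) = 0"
    by (metis integral_unique)
qed

lemma ultra_cond_unique:
  assumes l: "l \<ge> 1" and p: "ultra_cond l k p"
  shows "p = Geg l k"
proof -
  define G where "G = Geg l k"
  define d where "d = p - G"
  have G: "ultra_cond l k G" unfolding G_def by (rule ultra_cond_Geg[OF l])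
  have cd: "coeff d k = 0" using p G unfolding d_def ultra_cond_def by simp
  have dk: "degree d \<le> k" using p G unfolding d_def ultra_cond_def by (simp add: degree_diff_le)
  have "d = 0"
  proof (rule ccontr)
    assume dnz: "d \<noteq> 0"
    have dlt: "degree d < k"
    proof -
      have "degree d \<noteq> k" using cd dnz by (metis leading_coeff_0_iff)
      thus ?thesis using dk by simp
    qed
    let ?w = "\<lambda>x::real. (1 - x^2) powr (real l - 1/2)"
    have c: "continuous_on {-1..1} ?w" by (rule cont_powr_quad) (use l in simp)
    have i1: "((\<lambda>x. poly p x * poly d x * ?w x) has_integral 0) {-1..1}"
    proof -
      have "(\<lambda>x. poly p x * poly d x * ?w x) integrable_on {-1..1}"
        by (intro integrable_continuous_interval continuous_intros c)
      moreover have "integral {-1..1} (\<lambda>x. poly p x * poly d x * ?w x) = 0"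
        using p dlt unfolding ultra_cond_def by blast
      ultimately show ?thesis by (metis integrable_integral)
    qed
    have i2: "((\<lambda>x. poly G x * poly d x * ?w x) has_integral 0) {-1..1}"
    proof -
      have "(\<lambda>x. poly G x * poly d x * ?w x) integrable_on {-1..1}"
        by (intro integrable_continuous_interval continuous_intros c)
      moreover have "integral {-1..1} (\<lambda>x. poly G x * poly d x * ?w x) = 0"
        using G dlt unfolding ultra_cond_def by blast
      ultimately show ?thesis by (metis integrable_integral)
    qed
    have i3: "((\<lambda>x. poly d x * poly d x * ?w x) has_integral 0) {-1..1}"
    proof -
      have "((\<lambda>x. poly p x * poly d x * ?w x - poly G x * poly d x * ?w x) has_integral 0 - 0) {-1..1}"
        by (rule has_integral_diff[OF i1 i2])
      moreover have "(\<lambda>x. poly p x * poly d x * ?w x - poly G x * poly d x * ?w x) = (\<lambda>x. poly d x * poly d x * ?w x)"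
        by (rule ext) (simp add: d_def algebra_simps)
      ultimately show ?thesis by simp
    qed
    have z: "poly d x * poly d x * ?w x = 0" if x: "x \<in> {-1..1}" for x
    proof (rule has_integral_0_cbox_imp_0[of "-1" 1 "\<lambda>x. poly d x * poly d x * ?w x"])
      show "continuous_on (cbox (- 1) 1) (\<lambda>x. poly d x * poly d x * ?w x)"
        by (simp add: cbox_interval) (intro continuous_intros c)
      show "0 \<le> poly d x * poly d x * ?w x" if "x \<in> box (- 1) 1" for x by simp
      show "((\<lambda>x. poly d x * poly d x * ?w x) has_integral 0) (cbox (- 1) 1)" using i3 by (simp add: cbox_interval)
      show "box (- 1) (1::real) \<noteq> {}" by (simp add: box_real)
      show "x \<in> cbox (- 1) 1" using x by (simp add: cbox_interval)
    qed
    have "{-1<..<1::real} \<subseteq> {x. poly d x = 0}"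
    proof
      fix x :: real assume x: "x \<in> {-1<..<1}"
      have "0 < ?w x" using one_minus_sq_pos[of x] x by simp
      moreover have "poly d x * poly d x * ?w x = 0" using z x by simp
      ultimately show "x \<in> {x. poly d x = 0}" by simp
    qed
    moreover have "infinite {-1<..<1::real}" by (rule infinite_Ioo) simp
    ultimately have "infinite {x. poly d x = 0}" using finite_subset by blast
    thus False using poly_roots_finite dnz by blast
  qed
  thus ?thesis unfolding d_def G_def by simp
qed

lemma ultra_Geg: "l \<ge> 1 \<Longrightarrow> ultra l k = Geg l k"
  unfolding ultra_def using ultra_cond_Geg ultra_cond_unique by (auto intro!: the_equality)


definition Rf :: "nat \<Rightarrow> nat \<Rightarrow> real poly" where
  "Rf l k = (if l = 0 then Tch k else Geg l k)"

definition ar :: "nat \<Rightarrow> nat \<Rightarrow> real" where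
  "ar l k = (if l = 0 then (if k = 0 then 1 else 1/2)
             else (if k = 0 then 1 / (2 * real l) else (real k + 1) / (2 * (real k + real l))))"

definition br :: "nat \<Rightarrow> nat \<Rightarrow> real" where
  "br l k = (if k = 0 then 0 else if l = 0 then 1/2 else (real k + 2 * real l - 1) / (2 * (real k + real l)))"

lemma ultra_Rf: "ultra l k = Rf l k"
proof (cases "l = 0")
  case True then show ?thesis by (simp add: ultra_def Rf_def cheb_eq)
next
  case False then show ?thesis using ultra_Geg[of l k] by (simp add: Rf_def)
qed

lemma Rf_deg: "degree (Rf l k) = k \<and> coeff (Rf l k) k \<noteq> 0"
proof (cases "l = 0")
  case True then show ?thesis using Tch_deg[of k] Tch_nz[of k] by (simp add: Rf_def)
next
  case False
  hence l: "l \<ge> 1" by simp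
  have "0 < pochhammer (real l) k" using l by (intro pochhammer_pos) simp
  then show ?thesis using Geg_deg[OF l, of k] False by (simp add: Rf_def)
qed

lemma Geg_x: "l \<ge> 1 \<Longrightarrow> pCons 0 (Geg l k) = smult (ar l k) (Geg l (Suc k)) + smult (br l k) (Geg l (k - 1))"
proof (cases k)
  case 0
  assume "l \<ge> 1" then show ?thesis using 0 by (simp add: ar_def br_def)
next
  case (Suc n)
  assume l: "l \<ge> 1"
  show ?thesis
  proof (rule poly_eq_poly_eq_iff[THEN iffD1], rule ext)
    fix x :: real
    have r: "(real n + 2) * poly (Geg l (Suc (Suc n))) x =
       2 * (real n + 1 + real l) * x * poly (Geg l (Suc n)) x - (real n + 2 * real l) * poly (Geg l n) x"
      by (rule Geg_rec)
    have pos: "2 * (real n + 1 + real l) \<noteq> 0" by simp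
    define D where "D = 2 * (real n + 1 + real l)"
    have ea: "ar l (Suc n) = (real n + 2) / D" using l by (simp add: ar_def D_def algebra_simps)
    have eb: "br l (Suc n) = (real n + 2 * real l) / D" using l by (simp add: br_def D_def algebra_simps)
    have "poly (smult (ar l k) (Geg l (Suc k)) + smult (br l k) (Geg l (k - 1))) x
       = (real n + 2) / D * poly (Geg l (Suc (Suc n))) x + (real n + 2 * real l) / D * poly (Geg l n) x"
      unfolding Suc by (simp only: poly_add poly_smult ea eb diff_Suc_1)
    also have "\<dots> = ((real n + 2) * poly (Geg l (Suc (Suc n))) x + (real n + 2 * real l) * poly (Geg l n) x) / D"
      by (simp only: times_divide_eq_left add_divide_distrib[symmetric])
    also have "\<dots> = (D * (x * poly (Geg l (Suc n)) x)) / D"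
      unfolding r D_def by (simp add: algebra_simps del: Geg.simps)
    also have "\<dots> = x * poly (Geg l (Suc n)) x" using pos by (simp add: D_def)
    finally show "poly (pCons 0 (Geg l k)) x = poly (smult (ar l k) (Geg l (Suc k)) + smult (br l k) (Geg l (k - 1))) x"
      using Suc by simp
  qed
qed

lemma Rf_x: "pCons 0 (Rf l k) = smult (ar l k) (Rf l (Suc k)) + smult (br l k) (Rf l (k - 1))"
proof (cases "l = 0")
  case True then show ?thesis using Tch_x[of k] by (simp add: Rf_def ar_def br_def)
next
  case False then show ?thesis using Geg_x[of l k] by (simp add: Rf_def)
qed

lemma ar_bound: "\<bar>ar l k\<bar> \<le> 1"
proof -
  have "(real k + 1) / (2 * (real k + real l)) \<le> 1" if "l \<noteq> 0" "k \<noteq> 0"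
    using that by (subst divide_le_eq_1) auto
  moreover have "1 / (2 * real l) \<le> 1" if "l \<noteq> 0"
    using that by (subst divide_le_eq_1) auto
  ultimately show ?thesis unfolding ar_def by auto
qed

lemma br_bound: "\<bar>br l k\<bar> \<le> 1"
proof -
  have "(real k + 2 * real l - 1) / (2 * (real k + real l)) \<le> 1" if "l \<noteq> 0" "k \<noteq> 0"
    using that by (subst divide_le_eq_1) auto
  moreover have "0 \<le> (real k + 2 * real l - 1) / (2 * (real k + real l))" if "l \<noteq> 0" "k \<noteq> 0"
    using that by (intro divide_nonneg_nonneg) auto
  ultimately show ?thesis unfolding br_def by auto
qed

lemma map_poly_of_real_add: "map_poly complex_of_real (p + q) = map_poly complex_of_real p + map_poly complex_of_real q"
  by (rule poly_eqI) (simp add: coeff_map_poly)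

lemma map_poly_of_real_smult: "map_poly complex_of_real (smult c p) = smult (complex_of_real c) (map_poly complex_of_real p)"
  by (rule map_poly_smult) simp_all

lemma ultraC_Rf: "ultraC l k = map_poly complex_of_real (Rf l k)"
  by (simp add: ultraC_def ultra_Rf)

lemma ultraC_deg: "degree (ultraC l k) = k" and ultraC_nz: "coeff (ultraC l k) k \<noteq> 0"
  using Rf_deg[of l k] by (simp_all add: ultraC_Rf degree_map_poly coeff_map_poly)

lemma ultraC_x: "pCons 0 (ultraC l k) = smult (of_real (ar l k)) (ultraC l (Suc k)) + smult (of_real (br l k)) (ultraC l (k - 1))"
proof -
  have "map_poly complex_of_real (pCons 0 (Rf l k)) = map_poly complex_of_real (smult (ar l k) (Rf l (Suc k)) + smult (br l k) (Rf l (k - 1)))"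
    using Rf_x[of l k] by simp
  thus ?thesis unfolding ultraC_Rf by (simp add: map_poly_pCons map_poly_of_real_add map_poly_of_real_smult)
qed

lemma br0: "br l 0 = 0" by (simp add: br_def)


abbreviation lc :: "nat \<Rightarrow> (nat \<Rightarrow> complex) \<Rightarrow> nat \<Rightarrow> complex poly" where
  "lc l c n \<equiv> (\<Sum>i<n. smult (c i) (ultraC l i))"

lemma lc_deg_lt: "degree (lc l c n) < n \<or> lc l c n = 0"
proof (induction n)
  case 0 then show ?case by simp
next
  case (Suc n)
  have "degree (lc l c (Suc n)) \<le> n"
  proof -
    have "degree (lc l c n) \<le> n" using Suc by (cases "lc l c n = 0") auto
    moreover have "degree (smult (c n) (ultraC l n)) \<le> n" using ultraC_deg[of l n]
      by (metis degree_smult_le)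
    ultimately show ?thesis by (simp add: degree_add_le)
  qed
  then show ?case by simp
qed

lemma lc_coeff_n: "coeff (lc l c n) n = 0"
  using lc_deg_lt[where l=l and c=c and n=n] by (auto simp: coeff_eq_0)

lemma lc_indep: "lc l c n = 0 \<Longrightarrow> i < n \<Longrightarrow> c i = 0"
proof (induction n arbitrary: i)
  case 0 then show ?case by simp
next
  case (Suc n)
  have "coeff (lc l c (Suc n)) n = c n * coeff (ultraC l n) n"
    by (simp add: lc_coeff_n)
  moreover have "coeff (lc l c (Suc n)) n = 0" unfolding Suc.prems(1) by simp
  ultimately have cn: "c n = 0" using ultraC_nz[of l n] by simp
  have "lc l c (Suc n) = lc l c n + smult (c n) (ultraC l n)" by simp
  hence "lc l c n = 0" using Suc.prems(1) cn by simp
  thus ?case using Suc cn by (cases "i = n") auto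
qed

lemma lc_zero_above: "p = lc l c n \<Longrightarrow> i < n \<Longrightarrow> degree p < i \<Longrightarrow> c i = 0"
proof (induction n arbitrary: p)
  case 0 then show ?case by simp
next
  case (Suc n)
  show ?case
  proof (cases "c n = 0")
    case True
    hence "p = lc l c n" using Suc.prems by simp
    moreover have "i \<noteq> n \<or> c i = 0" using True by auto
    ultimately show ?thesis using Suc by (cases "i = n") auto
  next
    case False
    have d: "degree (smult (c n) (ultraC l n)) = n" using False ultraC_deg[of l n] by simp
    have "degree p = n"
    proof (cases "lc l c n = 0")
      case True then show ?thesis using Suc.prems(1) d by simp
    next
      case False
      hence "degree (lc l c n) < n" using lc_deg_lt[where l=l and c=c and n=n] by auto
      thus ?thesis using Suc.prems(1) d by (simp add: degree_add_eq_right)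
    qed
    thus ?thesis using Suc.prems by simp
  qed
qed

lemma lc_extend: "(\<And>i. n \<le> i \<Longrightarrow> i < m \<Longrightarrow> c i = 0) \<Longrightarrow> n \<le> m \<Longrightarrow> lc l c m = lc l c n"
  by (rule sum.mono_neutral_right) auto

lemma exists_rep: "\<exists>c. p = lc l c (Suc (degree p))"
proof (induction "degree p" arbitrary: p rule: less_induct)
  case less
  define d where "d = degree p"
  define a where "a = coeff p d / coeff (ultraC l d) d"
  define q where "q = p - smult a (ultraC l d)"
  have nz: "coeff (ultraC l d) d \<noteq> 0" by (rule ultraC_nz)
  have cq: "coeff q d = 0" using nz by (simp add: q_def a_def)
  have dq: "degree q \<le> d" unfolding q_def d_def
    using ultraC_deg[of l "degree p"] by (metis degree_diff_le degree_smult_le order_refl)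
  show ?case
  proof (cases "d = 0")
    case True
    hence "q = 0" using cq dq by (metis le_zero_eq leading_coeff_0_iff)
    hence "p = smult a (ultraC l 0)" using True by (simp add: q_def)
    thus ?thesis using True unfolding d_def by (intro exI[of _ "\<lambda>_. a"]) simp
  next
    case False
    have dqlt: "degree q < d"
    proof (cases "q = 0")
      case True then show ?thesis using False by simp
    next
      case False
      hence "degree q \<noteq> d" using cq by (metis leading_coeff_0_iff)
      thus ?thesis using dq by simp
    qed
    then obtain c' where c': "q = lc l c' (Suc (degree q))" using less d_def by blast
    define c where "c i = (if i = d then a else if i \<le> degree q then c' i else 0)" for i
    have "lc l c (Suc d) = lc l c d + smult a (ultraC l d)" by (simp add: c_def)
    also have "lc l c d = lc l c (Suc (degree q))"
      by (rule lc_extend) (use dqlt in \<open>auto simp: c_def\<close>)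
    also have "\<dots> = lc l c' (Suc (degree q))" by (rule sum.cong) (use dqlt in \<open>auto simp: c_def\<close>)
    also have "\<dots> + smult a (ultraC l d) = p" using c' by (simp add: q_def)
    finally have "lc l c (Suc d) = p" .
    thus ?thesis unfolding d_def by metis
  qed
qed

lemma gcoef_repr:
  assumes p: "p = lc l c n"
  shows "gcoef l p j = (if j < n then c j else 0)"
proof -
  define c0 where "c0 i = (if i < n then c i else 0)" for i
  define M where "M = max n (Suc (degree p))"
  have c0M: "lc l c0 M = p"
  proof -
    have "lc l c0 M = lc l c0 n" by (rule lc_extend) (auto simp: c0_def M_def)
    also have "\<dots> = p" unfolding p by (rule sum.cong) (auto simp: c0_def)
    finally show ?thesis .
  qed
  have c0z: "\<forall>i>degree p. c0 i = 0" using lc_zero_above[OF p] by (auto simp: c0_def)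
  have c0r: "p = (\<Sum>i\<le>degree p. smult (c0 i) (ultraC l i))"
  proof -
    have "(\<Sum>i\<le>degree p. smult (c0 i) (ultraC l i)) = lc l c0 (Suc (degree p))"
      by (simp add: lessThan_Suc_atMost)
    also have "\<dots> = lc l c0 M" by (rule lc_extend[symmetric]) (use c0z in \<open>auto simp: M_def\<close>)
    finally show ?thesis using c0M by simp
  qed
  have "gcoef l p = c0"
    unfolding gcoef_def
  proof (rule the_equality)
    show "(\<forall>i>degree p. c0 i = 0) \<and> p = (\<Sum>i\<le>degree p. smult (c0 i) (ultraC l i))" using c0z c0r by blast
  next
    fix c1 assume h: "(\<forall>i>degree p. c1 i = 0) \<and> p = (\<Sum>i\<le>degree p. smult (c1 i) (ultraC l i))"
    have c1M: "lc l c1 M = p"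
    proof -
      have "lc l c1 M = lc l c1 (Suc (degree p))" by (rule lc_extend) (use h in \<open>auto simp: M_def\<close>)
      thus ?thesis using h by (simp add: lessThan_Suc_atMost)
    qed
    have "lc l (\<lambda>i. c1 i - c0 i) M = 0" using c1M c0M
      by (simp add: smult_diff_left sum_subtractf)
    hence "\<forall>i<M. c1 i = c0 i" using lc_indep by fastforce
    moreover have "\<forall>i\<ge>M. c1 i = c0 i" using h by (auto simp: c0_def M_def)
    ultimately show "c1 = c0" by (metis not_le ext)
  qed
  thus ?thesis by (simp add: c0_def)
qed

lemma gcoef_self: "p = lc l (gcoef l p) (Suc (degree p))"
proof -
  obtain c where c: "p = lc l c (Suc (degree p))" using exists_rep by blast
  have e: "lc l (gcoef l p) (Suc (degree p)) = lc l c (Suc (degree p))"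
    by (rule sum.cong) (auto simp: gcoef_repr[OF c])
  show ?thesis by (rule trans[OF c e[symmetric]])
qed

lemma gcoef_zero_above: "degree p < j \<Longrightarrow> gcoef l p j = 0"
proof -
  assume a: "degree p < j"
  have h: "gcoef l p j = (if j < Suc (degree p) then gcoef l p j else 0)"
    by (rule gcoef_repr[OF gcoef_self[where p=p and l=l]])
  have e: "(if j < Suc (degree p) then gcoef l p j else 0) = 0" using a by simp
  show ?thesis using h e by (rule trans)
qed

lemma gcoef_self': "degree p < n \<Longrightarrow> p = lc l (gcoef l p) n"
proof -
  assume a: "degree p < n"
  have "lc l (gcoef l p) n = lc l (gcoef l p) (Suc (degree p))"
    by (rule lc_extend) (use a gcoef_zero_above in auto)
  thus ?thesis using gcoef_self[where p=p and l=l] by simp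
qed

lemma gcoef_add: "gcoef l (p + q) j = gcoef l p j + gcoef l q j"
proof -
  define n where "n = Suc (max (degree p) (degree q))"
  have ep: "p = lc l (gcoef l p) n" by (rule gcoef_self') (simp add: n_def)
  have eq: "q = lc l (gcoef l q) n" by (rule gcoef_self') (simp add: n_def)
  have s: "lc l (gcoef l p) n + lc l (gcoef l q) n = lc l (\<lambda>i. gcoef l p i + gcoef l q i) n"
    by (simp add: smult_add_left sum.distrib del: sum.lessThan_Suc)
  have "p + q = lc l (\<lambda>i. gcoef l p i + gcoef l q i) n"
    using ep eq s by metis
  from gcoef_repr[OF this] show ?thesis using gcoef_zero_above[where p=p and j=j and l=l] gcoef_zero_above[where p=q and j=j and l=l]
    by (auto simp: n_def)
qed

lemma gcoef_smult: "gcoef l (smult a p) j = a * gcoef l p j"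
proof -
  define n where "n = Suc (degree p)"
  have ep: "p = lc l (gcoef l p) n" by (rule gcoef_self') (simp add: n_def)
  have s: "smult a (lc l (gcoef l p) n) = lc l (\<lambda>i. a * gcoef l p i) n"
  proof (induction n)
    case (Suc n) then show ?case by (simp add: smult_add_right smult_smult)
  qed simp
  have "smult a p = lc l (\<lambda>i. a * gcoef l p i) n"
    using ep s by metis
  from gcoef_repr[OF this] show ?thesis using gcoef_zero_above[where p=p and j=j and l=l] by (auto simp: n_def)
qed

lemma gcoef_0: "gcoef l 0 j = 0"
  using gcoef_smult[where l=l and a=0 and p=0 and j=j] by simp

lemma gcoef_P: "gcoef l (ultraC l k) j = (if j = k then 1 else 0)"
proof -
  have "ultraC l k = lc l (\<lambda>i. if i = k then 1 else 0) (Suc k)"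
    by (simp add: if_distrib[of "\<lambda>c. smult c _"] cong: if_cong)
  from gcoef_repr[OF this] show ?thesis by auto
qed

lemma gcoef_sum: "finite S \<Longrightarrow> gcoef l (\<Sum>i\<in>S. f i) j = (\<Sum>i\<in>S. gcoef l (f i) j)"
  by (induction S rule: finite_induct) (simp_all add: gcoef_0 gcoef_add)

definition al :: "nat \<Rightarrow> nat \<Rightarrow> complex" where "al l k = of_real (ar l k)"
definition be :: "nat \<Rightarrow> nat \<Rightarrow> complex" where "be l k = of_real (br l k)"

lemma gcoef_x: "gcoef l (pCons 0 p) j = (if j = 0 then 0 else al l (j - 1) * gcoef l p (j - 1)) + be l (Suc j) * gcoef l p (Suc j)"
proof -
  define n where "n = Suc (degree p)"
  define g where "g = gcoef l p"
  have p_eq: "p = lc l g n" unfolding g_def n_def by (rule gcoef_self)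
  have "pCons 0 p = [:0, 1:] * lc l g n" by (subst p_eq[symmetric]) simp
  also have "\<dots> = (\<Sum>i<n. smult (g i) (pCons 0 (ultraC l i)))"
    by (simp add: sum_distrib_left mult_smult_right)
  also have "\<dots> = (\<Sum>i<n. smult (g i * al l i) (ultraC l (Suc i)) + smult (g i * be l i) (ultraC l (i - 1)))"
    by (rule sum.cong) (simp_all add: ultraC_x al_def be_def smult_add_right)
  finally have e: "pCons 0 p = \<dots>" .
  have "gcoef l (pCons 0 p) j = (\<Sum>i<n. g i * al l i * (if j = Suc i then 1 else 0) + g i * be l i * (if j = i - 1 then 1 else 0))"
    unfolding e gcoef_sum[OF finite_lessThan] by (simp add: gcoef_add gcoef_smult gcoef_P)
  also have "\<dots> = (\<Sum>i<n. (if j = Suc i then g i * al l i else 0)) + (\<Sum>i<n. (if i = Suc j then g i * be l i else 0))"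
    by (subst sum.distrib[symmetric], rule sum.cong) (auto simp: be_def br_def split: if_splits)
  also have "(\<Sum>i<n. (if j = Suc i then g i * al l i else 0)) = (if j = 0 then 0 else al l (j - 1) * g (j - 1))"
  proof (cases j)
    case 0 then show ?thesis by simp
  next
    case (Suc j')
    have "(\<Sum>i<n. (if j = Suc i then g i * al l i else 0)) = (\<Sum>i<n. (if j' = i then g i * al l i else 0))"
      using Suc by (intro sum.cong) auto
    also have "\<dots> = (if j' < n then g j' * al l j' else 0)" by (simp add: sum.delta)
    also have "\<dots> = al l j' * g j'" using gcoef_zero_above[where p=p and j=j' and l=l] by (auto simp: g_def n_def)
    finally show ?thesis using Suc by simp
  qed
  also have "(\<Sum>i<n. (if i = Suc j then g i * be l i else 0)) = be l (Suc j) * g (Suc j)"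
    using gcoef_zero_above[where p=p and j="Suc j" and l=l] by (auto simp: sum.delta' g_def n_def)
  finally show ?thesis by (simp add: g_def)
qed


lemma gM_pCons: "gcoef l (pCons c a * ultraC l k) j =
   c * (if j = k then 1 else 0) + ((if j = 0 then 0 else al l (j - 1) * gcoef l (a * ultraC l k) (j - 1))
   + be l (Suc j) * gcoef l (a * ultraC l k) (Suc j))"
proof -
  have "pCons c a * ultraC l k = smult c (ultraC l k) + pCons 0 (a * ultraC l k)" by simp
  thus ?thesis by (simp only: gcoef_add gcoef_smult gcoef_P gcoef_x)
qed

lemma gM_band: "\<exists>b. \<forall>k j. j + b < k \<longrightarrow> gcoef l (a * ultraC l k) j = 0"
proof (induction a rule: pCons_induct)
  case 0 then show ?case by (auto simp: gcoef_0)
next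
  case (pCons c a)
  then obtain b where b: "\<forall>k j. j + b < k \<longrightarrow> gcoef l (a * ultraC l k) j = 0" by blast
  have "\<forall>k j. j + Suc b < k \<longrightarrow> gcoef l (pCons c a * ultraC l k) j = 0"
  proof (intro allI impI)
    fix k j assume h: "j + Suc b < k"
    have "gcoef l (a * ultraC l k) (Suc j) = 0" using b h by simp
    moreover have "j \<noteq> 0 \<Longrightarrow> gcoef l (a * ultraC l k) (j - 1) = 0" using b h by simp
    moreover have "j \<noteq> k" using h by simp
    ultimately show "gcoef l (pCons c a * ultraC l k) j = 0" by (unfold gM_pCons) simp
  qed
  thus ?case by blast
qed

lemma Mop_fin:
  assumes b: "\<forall>k j. j + b < k \<longrightarrow> gcoef l (a * ultraC l k) j = 0" and n: "j + b < n"
  shows "Mop l a v j = (\<Sum>k<n. gcoef l (a * ultraC l k) j * v k)"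
  unfolding Mop_def by (rule suminf_finite) (use b n in auto)

definition Ax :: "nat \<Rightarrow> cseq \<Rightarrow> cseq" where
  "Ax l u j = (if j = 0 then 0 else al l (j - 1) * u (j - 1)) + be l (Suc j) * u (Suc j)"

lemma Mop_0: "Mop l 0 v = (\<lambda>j. 0)"
  by (rule ext) (simp add: Mop_def gcoef_0)

lemma Mop_pCons: "Mop l (pCons c a) v = (\<lambda>j. c * v j + Ax l (Mop l a v) j)"
proof (rule ext)
  fix j
  obtain b where b: "\<forall>k j. j + b < k \<longrightarrow> gcoef l (a * ultraC l k) j = 0" using gM_band by blast
  obtain b2 where b2: "\<forall>k j. j + b2 < k \<longrightarrow> gcoef l (pCons c a * ultraC l k) j = 0" using gM_band by blast
  define n where "n = j + b + b2 + 3"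
  have e1: "Mop l (pCons c a) v j = (\<Sum>k<n. gcoef l (pCons c a * ultraC l k) j * v k)"
    by (rule Mop_fin[OF b2]) (simp add: n_def)
  have e2: "Mop l a v (Suc j) = (\<Sum>k<n. gcoef l (a * ultraC l k) (Suc j) * v k)"
    by (rule Mop_fin[OF b]) (simp add: n_def)
  have e3: "j \<noteq> 0 \<Longrightarrow> Mop l a v (j - 1) = (\<Sum>k<n. gcoef l (a * ultraC l k) (j - 1) * v k)"
    by (rule Mop_fin[OF b]) (simp add: n_def)
  have "(\<Sum>k<n. gcoef l (pCons c a * ultraC l k) j * v k) =
     (\<Sum>k<n. (if j = k then c * v k else 0)) + (\<Sum>k<n. (if j = 0 then 0 else al l (j - 1) * (gcoef l (a * ultraC l k) (j - 1) * v k)))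
     + (\<Sum>k<n. be l (Suc j) * (gcoef l (a * ultraC l k) (Suc j) * v k))"
    unfolding gM_pCons sum.distrib[symmetric]
    by (rule sum.cong) (auto simp: algebra_simps)
  also have "(\<Sum>k<n. (if j = k then c * v k else 0)) = c * v j" by (simp add: sum.delta n_def)
  also have "(\<Sum>k<n. (if j = 0 then 0 else al l (j - 1) * (gcoef l (a * ultraC l k) (j - 1) * v k))) =
       (if j = 0 then 0 else al l (j - 1) * Mop l a v (j - 1))"
    using e3 by (simp add: sum_distrib_left)
  also have "(\<Sum>k<n. be l (Suc j) * (gcoef l (a * ultraC l k) (Suc j) * v k)) = be l (Suc j) * Mop l a v (Suc j)"
    using e2 by (simp add: sum_distrib_left)
  finally show "Mop l (pCons c a) v j = c * v j + Ax l (Mop l a v) j"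
    using e1 by (simp add: Ax_def add.assoc)
qed


definition wt :: "real \<Rightarrow> nat \<Rightarrow> real" where "wt mu k = (real k + 1) powr (2 * mu)"
definition Fw :: "real \<Rightarrow> cseq \<Rightarrow> nat \<Rightarrow> real" where "Fw mu v k = (cmod (v k))^2 * wt mu k"

lemma wt_pos: "0 < wt mu k" by (simp add: wt_def)
lemma Fw_nonneg: "0 \<le> Fw mu v k" by (simp add: Fw_def wt_def)

lemma in_l2_Fw: "in_l2 mu u \<longleftrightarrow> summable (Fw mu u)"
  by (simp add: in_l2_def Fw_def[abs_def] wt_def)

lemma l2norm_Fw: "l2norm mu u = sqrt (suminf (Fw mu u))"
  by (simp add: l2norm_def Fw_def[abs_def] wt_def)

definition band :: "(nat \<Rightarrow> real) \<Rightarrow> nat \<Rightarrow> nat \<Rightarrow> real" where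
  "band F m j = (\<Sum>i<m. F (j + i) + (if i \<le> j then F (j - i) else 0))"

lemma band_nonneg: "(\<And>k. 0 \<le> F k) \<Longrightarrow> 0 \<le> band F m j"
  unfolding band_def by (intro sum_nonneg) auto

lemma band_single:
  assumes F: "\<And>k. 0 \<le> F k" and k: "k < j + m" "j < k + m"
  shows "F k \<le> band F m j"
proof (cases "j \<le> k")
  case True
  define i where "i = k - j"
  have i: "i \<in> {..<m}" using k True by (simp add: i_def)
  have "F k \<le> F (j + i) + (if i \<le> j then F (j - i) else 0)" using True F by (simp add: i_def)
  also have "\<dots> \<le> band F m j" unfolding band_def
    by (rule member_le_sum[OF i]) (use F in auto)
  finally show ?thesis .
next
  case False
  define i where "i = j - k"
  have i: "i \<in> {..<m}" using k False by (simp add: i_def)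
  have "F k \<le> F (j + i) + (if i \<le> j then F (j - i) else 0)" using False F by (simp add: i_def)
  also have "\<dots> \<le> band F m j" unfolding band_def
    by (rule member_le_sum[OF i]) (use F in auto)
  finally show ?thesis .
qed

lemma band_le:
  assumes F: "\<And>k. 0 \<le> F k" and X: "\<And>k. k < j + m \<Longrightarrow> j < k + m \<Longrightarrow> F k \<le> X"
  shows "band F m j \<le> 2 * real m * X"
proof (cases "m = 0")
  case True then show ?thesis by (simp add: band_def)
next
  case False
  have X0: "0 \<le> X" using X[of j] F[of j] False by simp
  have "band F m j \<le> of_nat (card {..<m}) * (2 * X)" unfolding band_def
  proof (rule sum_bounded_above)
    fix i assume "i \<in> {..<m}"
    hence "F (j + i) \<le> X" "i \<le> j \<Longrightarrow> F (j - i) \<le> X" by (auto intro!: X)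
    thus "F (j + i) + (if i \<le> j then F (j - i) else 0) \<le> 2 * X" using X0 by auto
  qed
  thus ?thesis by simp
qed

lemma band_mono: "(\<And>k. F k \<le> G k) \<Longrightarrow> band F m j \<le> band G m j"
  unfolding band_def by (intro sum_mono add_mono) auto

lemma band_mono_m: "(\<And>k. 0 \<le> F k) \<Longrightarrow> m \<le> m' \<Longrightarrow> band F m j \<le> band F m' j"
  unfolding band_def by (rule sum_mono2) auto

lemma band_cmult: "band (\<lambda>k. c * F k) m j = c * band F m j"
  unfolding band_def by (simp add: sum_distrib_left algebra_simps if_distrib cong: if_cong)

lemma band_chain:
  assumes F: "\<And>k. 0 \<le> F k" and G: "\<And>k. k < j + m1 \<Longrightarrow> j < k + m1 \<Longrightarrow> G k \<le> c * band F m2 k"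
    and G0: "\<And>k. 0 \<le> G k" and c: "0 \<le> c"
  shows "band G m1 j \<le> 4 * real m1 * real m2 * c * band F (m1 + m2) j"
proof -
  have "band G m1 j \<le> 2 * real m1 * (c * (2 * real m2 * band F (m1 + m2) j))"
  proof (rule band_le[OF G0])
    fix k assume k: "k < j + m1" "j < k + m1"
    have "band F m2 k \<le> 2 * real m2 * band F (m1 + m2) j"
      by (rule band_le[OF F], rule band_single[OF F]) (use k in auto)
    hence "c * band F m2 k \<le> c * (2 * real m2 * band F (m1 + m2) j)" using c by (rule mult_left_mono)
    thus "G k \<le> c * (2 * real m2 * band F (m1 + m2) j)" using G[OF k] by simp
  qed
  thus ?thesis by (simp add: algebra_simps)
qed

lemma summable_band:
  assumes F: "\<And>k. 0 \<le> F k" and s: "summable F"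
  shows "summable (band F m) \<and> suminf (band F m) \<le> 2 * real m * suminf F"
proof -
  define G where "G i j = (if i \<le> j then F (j - i) else 0)" for i j
  have G: "G i sums suminf F" for i
  proof -
    have "(\<lambda>j. G i (j + i)) sums suminf F" using s by (simp add: G_def summable_sums)
    thus ?thesis by (subst (asm) sums_zero_iff_shift) (auto simp: G_def)
  qed
  have S: "summable (\<lambda>j. F (j + i))" for i using s by simp
  have le: "suminf (\<lambda>j. F (j + i)) \<le> suminf F" for i
  proof -
    have "suminf F = suminf (\<lambda>j. F (j + i)) + sum F {..<i}" by (rule suminf_split_initial_segment[OF s])
    moreover have "0 \<le> sum F {..<i}" by (intro sum_nonneg F)
    ultimately show ?thesis by simp
  qed
  have eqb: "band F m = (\<lambda>j. \<Sum>i<m. F (j + i) + G i j)" by (rule ext) (simp add: band_def G_def)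
  have sb: "summable (\<lambda>j. \<Sum>i<m. F (j + i) + G i j)"
    by (intro summable_sum summable_add S) (use G in \<open>auto simp: sums_iff\<close>)
  have "suminf (\<lambda>j. \<Sum>i<m. F (j + i) + G i j) = (\<Sum>i<m. suminf (\<lambda>j. F (j + i) + G i j))"
    by (rule suminf_sum) (intro summable_add S, use G in \<open>auto simp: sums_iff\<close>)
  also have "\<dots> = (\<Sum>i<m. suminf (\<lambda>j. F (j + i)) + suminf F)"
  proof (rule sum.cong[OF refl])
    fix i
    have sg: "summable (G i)" using G[of i] by (rule sums_summable)
    have "suminf (G i) = suminf F" using G[of i] by (rule sums_unique[symmetric])
    moreover have "suminf (\<lambda>j. F (j + i) + G i j) = suminf (\<lambda>j. F (j + i)) + suminf (G i)"
      by (rule suminf_add[symmetric, OF S sg])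
    ultimately show "suminf (\<lambda>j. F (j + i) + G i j) = suminf (\<lambda>j. F (j + i)) + suminf F" by simp
  qed
  also have "\<dots> \<le> (\<Sum>i<m. 2 * suminf F)" by (intro sum_mono) (use le in auto)
  finally show ?thesis using sb eqb by simp
qed

lemma sumbound:
  assumes F: "\<And>k. 0 \<le> F k" and s: "summable F" and C: "0 \<le> C"
    and g: "\<And>j. 0 \<le> g j" and gb: "\<And>j. g j \<le> C * band F m j"
  shows "summable g \<and> suminf g \<le> C * (2 * real m * suminf F)"
proof -
  from summable_band[OF F s] have sb: "summable (band F m)" and lb: "suminf (band F m) \<le> 2 * real m * suminf F" by auto
  have sC: "summable (\<lambda>j. C * band F m j)" using sb by (rule summable_mult)
  have sg: "summable g" by (rule summable_comparison_test'[OF sC, of 0]) (use g gb in auto)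
  have "suminf g \<le> suminf (\<lambda>j. C * band F m j)" by (rule suminf_le[OF gb sg sC])
  also have "\<dots> = C * suminf (band F m)" using sb by (rule suminf_mult)
  also have "\<dots> \<le> C * (2 * real m * suminf F)" using lb C by (rule mult_left_mono)
  finally show ?thesis using sg by simp
qed


definition lin :: "(cseq \<Rightarrow> cseq) \<Rightarrow> bool" where
  "lin T \<longleftrightarrow> (\<forall>u v c. T (\<lambda>k. c * u k + v k) = (\<lambda>k. c * T u k + T v k))"

definition Bnd :: "real \<Rightarrow> (cseq \<Rightarrow> cseq) \<Rightarrow> bool" where
  "Bnd mu T \<longleftrightarrow> lin T \<and> (\<exists>C m. 0 \<le> C \<and> (\<forall>v j. Fw mu (T v) j \<le> C * band (Fw mu v) m j))"

definition CCo :: "real \<Rightarrow> (cseq \<Rightarrow> cseq) \<Rightarrow> bool" where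
  "CCo mu T \<longleftrightarrow> Bnd mu T \<and> (\<exists>m. \<forall>e>0. \<exists>M. \<forall>v j. M \<le> j \<longrightarrow> Fw mu (T v) j \<le> e * band (Fw mu v) m j)"

lemma BndI: "lin T \<Longrightarrow> 0 \<le> C \<Longrightarrow> (\<And>v j. Fw mu (T v) j \<le> C * band (Fw mu v) m j) \<Longrightarrow> Bnd mu T"
  unfolding Bnd_def by blast

lemma CCoI: "Bnd mu T \<Longrightarrow> (\<And>e. e > 0 \<Longrightarrow> \<exists>M. \<forall>v j. M \<le> j \<longrightarrow> Fw mu (T v) j \<le> e * band (Fw mu v) m j) \<Longrightarrow> CCo mu T"
  unfolding CCo_def by blast

lemma CCo_Bnd: "CCo mu T \<Longrightarrow> Bnd mu T" unfolding CCo_def by blast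

lemma Bnd_lin: "Bnd mu T \<Longrightarrow> lin T" unfolding Bnd_def by blast

lemma lin_diff: "lin T \<Longrightarrow> T (\<lambda>k. x k - y k) = (\<lambda>k. T x k - T y k)"
proof -
  assume "lin T"
  hence "T (\<lambda>k. (-1) * y k + x k) = (\<lambda>k. (-1) * T y k + T x k)" unfolding lin_def by blast
  thus ?thesis by (simp add: algebra_simps)
qed

lemma Bnd_l2:
  assumes "Bnd mu T"
  shows "\<exists>K\<ge>0. \<forall>v. in_l2 mu v \<longrightarrow> in_l2 mu (T v) \<and> suminf (Fw mu (T v)) \<le> K * suminf (Fw mu v)"
proof -
  obtain C m where C: "0 \<le> C" and b: "\<And>v j. Fw mu (T v) j \<le> C * band (Fw mu v) m j"
    using assms unfolding Bnd_def by blast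
  have "in_l2 mu (T v) \<and> suminf (Fw mu (T v)) \<le> (C * (2 * real m)) * suminf (Fw mu v)" if "in_l2 mu v" for v
    using sumbound[of "Fw mu v" C "Fw mu (T v)" m, OF Fw_nonneg _ C Fw_nonneg b] that
    by (simp add: in_l2_Fw mult.assoc)
  thus ?thesis using C by (intro exI[of _ "C * (2 * real m)"]) auto
qed

lemma Bnd_comp:
  assumes S: "Bnd mu S" and T: "Bnd mu T"
  shows "Bnd mu (S \<circ> T)"
proof -
  obtain Cs ms where Cs: "0 \<le> Cs" and bs: "\<And>v j. Fw mu (S v) j \<le> Cs * band (Fw mu v) ms j"
    using S unfolding Bnd_def by blast
  obtain Ct mt where Ct: "0 \<le> Ct" and bt: "\<And>v j. Fw mu (T v) j \<le> Ct * band (Fw mu v) mt j"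
    using T unfolding Bnd_def by blast
  show ?thesis
  proof (rule BndI)
    show "lin (S \<circ> T)" using Bnd_lin[OF S] Bnd_lin[OF T] unfolding lin_def by simp
    show "0 \<le> Cs * (4 * real ms * real mt * Ct)" using Cs Ct by simp
    fix v j
    have "Fw mu ((S \<circ> T) v) j \<le> Cs * band (Fw mu (T v)) ms j" using bs by simp
    also have "\<dots> \<le> Cs * (4 * real ms * real mt * Ct * band (Fw mu v) (ms + mt) j)"
      by (intro mult_left_mono Cs band_chain Fw_nonneg bt Ct)
    finally show "Fw mu ((S \<circ> T) v) j \<le> Cs * (4 * real ms * real mt * Ct) * band (Fw mu v) (ms + mt) j"
      by (simp add: mult.assoc)
  qed
qed

lemma CCo_comp1:
  assumes S: "Bnd mu S" and T: "CCo mu T"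
  shows "CCo mu (S \<circ> T)"
proof -
  obtain Cs ms where Cs: "0 \<le> Cs" and bs: "\<And>v j. Fw mu (S v) j \<le> Cs * band (Fw mu v) ms j"
    using S unfolding Bnd_def by blast
  obtain mt where tt: "\<And>e. e > 0 \<Longrightarrow> \<exists>M. \<forall>v j. M \<le> j \<longrightarrow> Fw mu (T v) j \<le> e * band (Fw mu v) mt j"
    using T unfolding CCo_def by blast
  show ?thesis
  proof (rule CCoI[where m = "ms + mt"])
    show "Bnd mu (S \<circ> T)" by (rule Bnd_comp[OF S CCo_Bnd[OF T]])
    fix e :: real assume e: "e > 0"
    define K where "K = Cs * (4 * real ms * real mt) + 1"
    have K: "K > 0" using Cs unfolding K_def by (simp add: add_nonneg_pos)
    obtain M where M: "\<And>v j. M \<le> j \<Longrightarrow> Fw mu (T v) j \<le> (e / K) * band (Fw mu v) mt j"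
      using tt[of "e / K"] e K by auto
    have "Fw mu ((S \<circ> T) v) j \<le> e * band (Fw mu v) (ms + mt) j" if j: "M + ms \<le> j" for v j
    proof -
      have "Fw mu ((S \<circ> T) v) j \<le> Cs * band (Fw mu (T v)) ms j" using bs by simp
      also have "\<dots> \<le> Cs * (4 * real ms * real mt * (e / K) * band (Fw mu v) (ms + mt) j)"
        by (intro mult_left_mono Cs band_chain Fw_nonneg M) (use j e K in auto)
      also have "\<dots> = (Cs * (4 * real ms * real mt)) * (e / K) * band (Fw mu v) (ms + mt) j" by simp
      also have "\<dots> \<le> e * band (Fw mu v) (ms + mt) j"
      proof (rule mult_right_mono)
        have "(Cs * (4 * real ms * real mt)) * (e / K) \<le> K * (e / K)"
          using e K by (intro mult_right_mono) (auto simp: K_def)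
        thus "Cs * (4 * real ms * real mt) * (e / K) \<le> e" using K by simp
      qed (intro band_nonneg Fw_nonneg)
      finally show ?thesis .
    qed
    thus "\<exists>M. \<forall>v j. M \<le> j \<longrightarrow> Fw mu ((S \<circ> T) v) j \<le> e * band (Fw mu v) (ms + mt) j" by blast
  qed
qed

lemma CCo_comp2:
  assumes S: "CCo mu S" and T: "Bnd mu T"
  shows "CCo mu (S \<circ> T)"
proof -
  obtain ms where ss: "\<And>e. e > 0 \<Longrightarrow> \<exists>M. \<forall>v j. M \<le> j \<longrightarrow> Fw mu (S v) j \<le> e * band (Fw mu v) ms j"
    using S unfolding CCo_def by blast
  obtain Ct mt where Ct: "0 \<le> Ct" and bt: "\<And>v j. Fw mu (T v) j \<le> Ct * band (Fw mu v) mt j"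
    using T unfolding Bnd_def by blast
  show ?thesis
  proof (rule CCoI[where m = "ms + mt"])
    show "Bnd mu (S \<circ> T)" by (rule Bnd_comp[OF CCo_Bnd[OF S] T])
    fix e :: real assume e: "e > 0"
    define K where "K = 4 * real ms * real mt * Ct + 1"
    have K: "K > 0" using Ct unfolding K_def by (simp add: add_nonneg_pos)
    obtain M where M: "\<And>v j. M \<le> j \<Longrightarrow> Fw mu (S v) j \<le> (e / K) * band (Fw mu v) ms j"
      using ss[of "e / K"] e K by auto
    have "Fw mu ((S \<circ> T) v) j \<le> e * band (Fw mu v) (ms + mt) j" if j: "M \<le> j" for v j
    proof -
      have "Fw mu ((S \<circ> T) v) j \<le> (e / K) * band (Fw mu (T v)) ms j" using M[OF j] by simp
      also have "\<dots> \<le> (e / K) * (4 * real ms * real mt * Ct * band (Fw mu v) (ms + mt) j)"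
        by (intro mult_left_mono band_chain Fw_nonneg bt Ct) (use e K in auto)
      also have "\<dots> = (4 * real ms * real mt * Ct) * (e / K) * band (Fw mu v) (ms + mt) j" by simp
      also have "\<dots> \<le> e * band (Fw mu v) (ms + mt) j"
      proof (rule mult_right_mono)
        have "(4 * real ms * real mt * Ct) * (e / K) \<le> K * (e / K)"
          using e K by (intro mult_right_mono) (auto simp: K_def)
        thus "4 * real ms * real mt * Ct * (e / K) \<le> e" using K by simp
      qed (intro band_nonneg Fw_nonneg)
      finally show ?thesis .
    qed
    thus "\<exists>M. \<forall>v j. M \<le> j \<longrightarrow> Fw mu ((S \<circ> T) v) j \<le> e * band (Fw mu v) (ms + mt) j" by blast
  qed
qed

lemma Fw_add: "Fw mu (\<lambda>k. a k + b k) j \<le> 2 * Fw mu a j + 2 * Fw mu b j"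
proof -
  have "(cmod (a j + b j))^2 \<le> (cmod (a j) + cmod (b j))^2"
    by (intro power_mono norm_triangle_ineq) simp
  also have "\<dots> \<le> 2 * (cmod (a j))^2 + 2 * (cmod (b j))^2"
    using sum_squares_bound[of "cmod (a j)" "cmod (b j)"] by (simp add: power2_eq_square algebra_simps)
  finally have "(cmod (a j + b j))^2 * wt mu j \<le> (2 * (cmod (a j))^2 + 2 * (cmod (b j))^2) * wt mu j"
    using wt_pos[of mu j] by (intro mult_right_mono) auto
  thus ?thesis by (simp add: Fw_def algebra_simps)
qed

lemma Bnd_add:
  assumes S: "Bnd mu S" and T: "Bnd mu T"
  shows "Bnd mu (\<lambda>v k. S v k + T v k)"
proof -
  obtain Cs ms where Cs: "0 \<le> Cs" and bs: "\<And>v j. Fw mu (S v) j \<le> Cs * band (Fw mu v) ms j"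
    using S unfolding Bnd_def by blast
  obtain Ct mt where Ct: "0 \<le> Ct" and bt: "\<And>v j. Fw mu (T v) j \<le> Ct * band (Fw mu v) mt j"
    using T unfolding Bnd_def by blast
  show ?thesis
  proof (rule BndI[where C = "2 * Cs + 2 * Ct" and m = "max ms mt"])
    show "lin (\<lambda>v k. S v k + T v k)" using Bnd_lin[OF S] Bnd_lin[OF T] unfolding lin_def
      by (simp add: algebra_simps)
    show "0 \<le> 2 * Cs + 2 * Ct" using Cs Ct by simp
    fix v j
    have m1: "band (Fw mu v) ms j \<le> band (Fw mu v) (max ms mt) j" by (intro band_mono_m Fw_nonneg) simp
    have m2: "band (Fw mu v) mt j \<le> band (Fw mu v) (max ms mt) j" by (intro band_mono_m Fw_nonneg) simp
    have "Fw mu (\<lambda>k. S v k + T v k) j \<le> 2 * Fw mu (S v) j + 2 * Fw mu (T v) j" by (rule Fw_add)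
    also have "\<dots> \<le> 2 * (Cs * band (Fw mu v) (max ms mt) j) + 2 * (Ct * band (Fw mu v) (max ms mt) j)"
      using bs[of v j] bt[of v j] mult_left_mono[OF m1 Cs] mult_left_mono[OF m2 Ct] by linarith
    finally show "Fw mu (\<lambda>k. S v k + T v k) j \<le> (2 * Cs + 2 * Ct) * band (Fw mu v) (max ms mt) j"
      by (simp add: algebra_simps)
  qed
qed

lemma CCo_add:
  assumes S: "CCo mu S" and T: "CCo mu T"
  shows "CCo mu (\<lambda>v k. S v k + T v k)"
proof -
  obtain ms where ss: "\<And>e. e > 0 \<Longrightarrow> \<exists>M. \<forall>v j. M \<le> j \<longrightarrow> Fw mu (S v) j \<le> e * band (Fw mu v) ms j"
    using S unfolding CCo_def by blast
  obtain mt where tt: "\<And>e. e > 0 \<Longrightarrow> \<exists>M. \<forall>v j. M \<le> j \<longrightarrow> Fw mu (T v) j \<le> e * band (Fw mu v) mt j"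
    using T unfolding CCo_def by blast
  show ?thesis
  proof (rule CCoI[where m = "max ms mt"])
    show "Bnd mu (\<lambda>v k. S v k + T v k)" by (rule Bnd_add[OF CCo_Bnd[OF S] CCo_Bnd[OF T]])
    fix e :: real assume e: "e > 0"
    obtain M1 where M1: "\<And>v j. M1 \<le> j \<Longrightarrow> Fw mu (S v) j \<le> (e / 4) * band (Fw mu v) ms j"
      using ss[of "e / 4"] e by auto
    obtain M2 where M2: "\<And>v j. M2 \<le> j \<Longrightarrow> Fw mu (T v) j \<le> (e / 4) * band (Fw mu v) mt j"
      using tt[of "e / 4"] e by auto
    have "Fw mu (\<lambda>k. S v k + T v k) j \<le> e * band (Fw mu v) (max ms mt) j" if j: "max M1 M2 \<le> j" for v j
    proof -
      have m1: "band (Fw mu v) ms j \<le> band (Fw mu v) (max ms mt) j" by (intro band_mono_m Fw_nonneg) simp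
      have m2: "band (Fw mu v) mt j \<le> band (Fw mu v) (max ms mt) j" by (intro band_mono_m Fw_nonneg) simp
      have f: "Fw mu (\<lambda>k. S v k + T v k) j \<le> 2 * Fw mu (S v) j + 2 * Fw mu (T v) j" by (rule Fw_add)
      have a1: "e * band (Fw mu v) ms j \<le> e * band (Fw mu v) (max ms mt) j" using m1 e by (intro mult_left_mono) auto
      have a2: "e * band (Fw mu v) mt j \<le> e * band (Fw mu v) (max ms mt) j" using m2 e by (intro mult_left_mono) auto
      have s1: "4 * Fw mu (S v) j \<le> e * band (Fw mu v) ms j" using M1[of j v] j by simp
      have s2: "4 * Fw mu (T v) j \<le> e * band (Fw mu v) mt j" using M2[of j v] j by simp
      from f a1 a2 s1 s2 show ?thesis by linarith
    qed
    thus "\<exists>M. \<forall>v j. M \<le> j \<longrightarrow> Fw mu (\<lambda>k. S v k + T v k) j \<le> e * band (Fw mu v) (max ms mt) j" by blast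
  qed
qed

lemma CCo_zero: "CCo mu (\<lambda>v k. 0)"
proof (rule CCoI[where m = 0])
  show "Bnd mu (\<lambda>v k. 0)" by (rule BndI[where C = 0 and m = 0]) (auto simp: lin_def Fw_def band_def)
  fix e :: real assume "e > 0"
  thus "\<exists>M. \<forall>v j. M \<le> j \<longrightarrow> Fw mu ((\<lambda>v k. 0) v) j \<le> e * band (Fw mu v) 0 j" by (auto simp: Fw_def band_def)
qed

lemma CCo_sum:
  assumes "finite A" and "\<And>i. i \<in> A \<Longrightarrow> CCo mu (T i)"
  shows "CCo mu (\<lambda>v k. \<Sum>i\<in>A. T i v k)"
  using assms
proof (induction A rule: finite_induct)
  case empty then show ?case using CCo_zero by simp
next
  case (insert x F)
  have "CCo mu (\<lambda>v k. T x v k + (\<Sum>i\<in>F. T i v k))"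
    by (rule CCo_add[where S = "T x" and T = "\<lambda>v k. \<Sum>i\<in>F. T i v k", simplified]) (use insert in auto)
  thus ?case using insert by simp
qed


lemma powr_ratio:
  fixes a b K t :: real
  assumes a: "0 < a" and b: "0 < b" and K: "1 \<le> K" and ab: "a \<le> K * b" and ba: "b \<le> K * a"
  shows "a powr t \<le> K powr \<bar>t\<bar> * b powr t"
proof (cases "t \<ge> 0")
  case True
  have "a powr t \<le> (K * b) powr t" by (rule powr_mono2) (use True a ab in auto)
  also have "\<dots> = K powr t * b powr t" using K b by (simp add: powr_mult)
  finally show ?thesis using True by simp
next
  case False
  define s where "s = - t"
  have s: "0 < s" using False by (simp add: s_def)
  have "b powr s \<le> (K * a) powr s" by (rule powr_mono2) (use s b ba in auto)
  also have "\<dots> = K powr s * a powr s" using K a by (simp add: powr_mult)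
  finally have le: "b powr s \<le> K powr s * a powr s" .
  have pa: "0 < a powr s" "0 < b powr s" using a b by auto
  have "a powr t = inverse (a powr s)" by (simp add: s_def powr_minus)
  also have "\<dots> \<le> K powr s * inverse (b powr s)"
    using le pa by (simp add: field_simps)
  also have "inverse (b powr s) = b powr t" by (simp add: s_def powr_minus)
  finally show ?thesis using False by (simp add: s_def)
qed

lemma wt_cmp:
  assumes "k < j + m" "j < k + m"
  shows "wt mu j \<le> (real m + 1) powr (2 * \<bar>mu\<bar>) * wt mu k"
proof -
  have j1: "real j + 1 \<le> real k + real m" using assms(2) by linarith
  have k1: "real k + 1 \<le> real j + real m" using assms(1) by linarith
  have p1: "real k + real m \<le> (real m + 1) * (real k + 1)" by (simp add: algebra_simps)
  have p2: "real j + real m \<le> (real m + 1) * (real j + 1)" by (simp add: algebra_simps)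
  have "(real j + 1) powr (2 * mu) \<le> (real m + 1) powr \<bar>2 * mu\<bar> * (real k + 1) powr (2 * mu)"
    by (rule powr_ratio) (use j1 k1 p1 p2 in auto)
  thus ?thesis by (simp add: wt_def abs_mult)
qed

lemma term_band:
  assumes "k < j + m" "j < k + m"
  shows "(cmod (v k))^2 * wt mu j \<le> (real m + 1) powr (2 * \<bar>mu\<bar>) * band (Fw mu v) m j"
proof -
  have "(cmod (v k))^2 * wt mu j \<le> (cmod (v k))^2 * ((real m + 1) powr (2 * \<bar>mu\<bar>) * wt mu k)"
    by (intro mult_left_mono wt_cmp assms) simp
  also have "\<dots> = (real m + 1) powr (2 * \<bar>mu\<bar>) * Fw mu v k" by (simp add: Fw_def)
  also have "\<dots> \<le> (real m + 1) powr (2 * \<bar>mu\<bar>) * band (Fw mu v) m j"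
    by (intro mult_left_mono band_single Fw_nonneg assms) simp
  finally show ?thesis .
qed

lemma Fw_tendsto0: "(\<lambda>n. vs n k) \<longlonglongrightarrow> 0 \<Longrightarrow> (\<lambda>n. Fw mu (vs n) k) \<longlonglongrightarrow> 0"
proof -
  assume h: "(\<lambda>n. vs n k) \<longlonglongrightarrow> 0"
  have "(\<lambda>n. (cmod (vs n k))^2 * wt mu k) \<longlonglongrightarrow> (cmod 0)^2 * wt mu k"
    by (intro tendsto_intros h)
  thus ?thesis by (simp add: Fw_def)
qed

lemma band_tendsto0:
  assumes "\<And>k. (\<lambda>n. vs n k) \<longlonglongrightarrow> 0"
  shows "(\<lambda>n. band (Fw mu (vs n)) m j) \<longlonglongrightarrow> 0"
proof -
  have c: "(\<lambda>n. if i \<le> j then Fw mu (vs n) (j - i) else 0) \<longlonglongrightarrow> 0" for i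
    by (cases "i \<le> j") (auto intro: Fw_tendsto0 assms)
  have "(\<lambda>n. \<Sum>i<m. Fw mu (vs n) (j + i) + (if i \<le> j then Fw mu (vs n) (j - i) else 0)) \<longlonglongrightarrow> (\<Sum>i<m. 0 + 0)"
    by (intro tendsto_sum tendsto_add Fw_tendsto0 assms c)
  thus ?thesis by (simp add: band_def)
qed

lemma Bnd_in_l2: "Bnd mu T \<Longrightarrow> in_l2 mu v \<Longrightarrow> in_l2 mu (T v)"
proof -
  assume T: "Bnd mu T" and v: "in_l2 mu v"
  from T obtain C m where C: "0 \<le> C" and b: "\<And>v j. Fw mu (T v) j \<le> C * band (Fw mu v) m j"
    unfolding Bnd_def by auto
  have "summable (Fw mu v)" using v by (simp add: in_l2_Fw)
  from sumbound[OF Fw_nonneg this C Fw_nonneg b] show ?thesis by (simp add: in_l2_Fw)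
qed

lemma CCo_seq:
  assumes T: "CCo mu T" and l2: "\<And>n. in_l2 mu (vs n)" and bd: "\<And>n. suminf (Fw mu (vs n)) \<le> Bd"
    and co: "\<And>k. (\<lambda>n. vs n k) \<longlonglongrightarrow> 0"
  shows "(\<lambda>n. suminf (Fw mu (T (vs n)))) \<longlonglongrightarrow> 0"
proof (rule LIMSEQ_I)
  fix r :: real assume r: "0 < r"
  have TB: "Bnd mu T" using T by (rule CCo_Bnd)
  from TB obtain C mb where C: "0 \<le> C" and bt: "\<And>v j. Fw mu (T v) j \<le> C * band (Fw mu v) mb j"
    unfolding Bnd_def by auto
  from T obtain m where tt: "\<And>e. e > 0 \<Longrightarrow> \<exists>M. \<forall>v j. M \<le> j \<longrightarrow> Fw mu (T v) j \<le> e * band (Fw mu v) m j"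
    unfolding CCo_def by auto
  have KK: "\<And>v. in_l2 mu v \<Longrightarrow> in_l2 mu (T v)" using Bnd_in_l2[OF TB] .
  have "0 \<le> suminf (Fw mu (vs 0))"
    by (rule suminf_nonneg) (use l2[of 0] in \<open>auto simp: in_l2_Fw Fw_nonneg\<close>)
  hence Bd0: "0 \<le> Bd" using bd[of 0] by linarith
  define e where "e = r / (4 * (real m + 1) * (Bd + 1))"
  have e: "0 < e" using r Bd0 by (simp add: e_def)
  obtain M where M: "\<And>v j. M \<le> j \<Longrightarrow> Fw mu (T v) j \<le> e * band (Fw mu v) m j" using tt[OF e] by blast
  define g where "g n j = (if j < M then 0 else Fw mu (T (vs n)) j)" for n j
  have tail: "suminf (g n) \<le> r / 2" for n
  proof -
    have sb: "summable (g n) \<and> suminf (g n) \<le> e * (2 * real m * suminf (Fw mu (vs n)))"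
    proof (rule sumbound[OF Fw_nonneg _ less_imp_le[OF e]])
      show "summable (Fw mu (vs n))" using l2 by (simp add: in_l2_Fw)
      show "0 \<le> g n j" for j by (simp add: g_def Fw_nonneg)
      show "g n j \<le> e * band (Fw mu (vs n)) m j" for j
      proof (cases "j < M")
        case True
        have "0 \<le> e * band (Fw mu (vs n)) m j" using e by (intro mult_nonneg_nonneg band_nonneg Fw_nonneg) auto
        thus ?thesis using True by (simp add: g_def)
      next
        case False thus ?thesis using M[of j "vs n"] by (simp add: g_def)
      qed
    qed
    have "e * (2 * real m * suminf (Fw mu (vs n))) \<le> e * (2 * real m * Bd)"
      using bd[of n] e by (intro mult_left_mono) auto
    also have "\<dots> \<le> e * (2 * ((real m + 1) * (Bd + 1)))"
    proof -
      have "real m * Bd \<le> (real m + 1) * (Bd + 1)" using Bd0 by (intro mult_mono) auto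
      thus ?thesis using e by (intro mult_left_mono) auto
    qed
    also have "\<dots> = r / 2"
    proof -
      define X where "X = (real m + 1) * (Bd + 1)"
      have X: "X > 0" using Bd0 by (simp add: X_def)
      have "e = r / (4 * X)" by (simp add: e_def X_def mult.assoc)
      hence "e * (2 * X) = r / 2" using X by (simp add: field_simps)
      thus ?thesis by (simp add: X_def)
    qed
    finally show ?thesis using sb by simp
  qed
  have head: "(\<lambda>n. \<Sum>j<M. Fw mu (T (vs n)) j) \<longlonglongrightarrow> 0"
  proof -
    have "(\<lambda>n. Fw mu (T (vs n)) j) \<longlonglongrightarrow> 0" for j
    proof (rule tendsto_sandwich[of "\<lambda>_. 0" _ _ "\<lambda>n. C * band (Fw mu (vs n)) mb j"])
      show "\<forall>\<^sub>F n in sequentially. 0 \<le> Fw mu (T (vs n)) j" by (simp add: Fw_nonneg)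
      show "\<forall>\<^sub>F n in sequentially. Fw mu (T (vs n)) j \<le> C * band (Fw mu (vs n)) mb j" by (simp add: bt)
      show "(\<lambda>n. C * band (Fw mu (vs n)) mb j) \<longlonglongrightarrow> 0"
        using tendsto_mult_right_zero[OF band_tendsto0[OF co]] by simp
    qed simp
    hence "(\<lambda>n. \<Sum>j<M. Fw mu (T (vs n)) j) \<longlonglongrightarrow> (\<Sum>j<M. 0)" by (intro tendsto_sum) auto
    thus ?thesis by simp
  qed
  have "\<exists>N. \<forall>n\<ge>N. norm ((\<Sum>j<M. Fw mu (T (vs n)) j) - 0) < r / 2"
    by (rule LIMSEQ_D[OF head]) (use r in simp)
  then obtain N where N0: "\<forall>n\<ge>N. norm ((\<Sum>j<M. Fw mu (T (vs n)) j) - 0) < r / 2" by blast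
  have N: "\<And>n. n \<ge> N \<Longrightarrow> \<bar>\<Sum>j<M. Fw mu (T (vs n)) j\<bar> < r / 2" using N0 by simp
  have split: "suminf (Fw mu (T (vs n))) = (\<Sum>j<M. Fw mu (T (vs n)) j) + suminf (g n)" for n
  proof -
    have s: "summable (Fw mu (T (vs n)))" using KK[OF l2[of n]] by (simp add: in_l2_Fw)
    have s1: "summable (\<lambda>j. if j < M then Fw mu (T (vs n)) j else 0)"
      by (rule summable_finite[of "{..<M}"]) auto
    have eq: "Fw mu (T (vs n)) = (\<lambda>j. (if j < M then Fw mu (T (vs n)) j else 0) + g n j)"
      by (rule ext) (simp add: g_def)
    have s2: "summable (g n)"
    proof -
      have "summable (\<lambda>j. Fw mu (T (vs n)) j - (if j < M then Fw mu (T (vs n)) j else 0))"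
        by (rule summable_diff[OF s s1])
      moreover have "(\<lambda>j. Fw mu (T (vs n)) j - (if j < M then Fw mu (T (vs n)) j else 0)) = g n"
        by (rule ext) (simp add: g_def)
      ultimately show ?thesis by simp
    qed
    have "suminf (Fw mu (T (vs n))) = suminf (\<lambda>j. if j < M then Fw mu (T (vs n)) j else 0) + suminf (g n)"
      by (subst eq) (rule suminf_add[symmetric, OF s1 s2])
    moreover have "suminf (\<lambda>j. if j < M then Fw mu (T (vs n)) j else 0) = (\<Sum>j<M. Fw mu (T (vs n)) j)"
      by (subst suminf_finite[of "{..<M}"]) auto
    ultimately show ?thesis by simp
  qed
  have "norm (suminf (Fw mu (T (vs n))) - 0) < r" if n: "n \<ge> N" for n
  proof -
    have nn: "0 \<le> suminf (Fw mu (T (vs n)))"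
      using KK[OF l2[of n]] by (intro suminf_nonneg) (auto simp: in_l2_Fw Fw_nonneg)
    have "suminf (Fw mu (T (vs n))) < r / 2 + r / 2" using split[of n] N[OF n] tail[of n] by linarith
    thus ?thesis using nn by simp
  qed
  thus "\<exists>no. \<forall>n\<ge>no. norm (suminf (Fw mu (T (vs n))) - 0) < r" by blast
qed


lemma sq_sum_le: "((a::real) + b)^2 \<le> 2 * a^2 + 2 * b^2"
  using sum_squares_bound[of a b] by (simp add: power2_eq_square algebra_simps)

lemma pt2_key:
  fixes d :: "nat \<Rightarrow> real"
  assumes pt: "\<And>u j. cmod (T u j) \<le> d j * (cmod (u (fa j)) + cmod (u (fb j)))"
    and c1: "\<And>j. fa j < j + m" "\<And>j. j < fa j + m"
    and c2: "\<And>j. fb j < j + m" "\<And>j. j < fb j + m"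
    and d0: "\<And>j. 0 \<le> d j"
  shows "Fw mu (T u) j \<le> (4 * ((real m + 1) powr (2 * \<bar>mu\<bar>)) * (d j)^2) * band (Fw mu u) m j"
proof -
  define K where "K = (real m + 1) powr (2 * \<bar>mu\<bar>)"
  have "(cmod (T u j))^2 \<le> (d j * (cmod (u (fa j)) + cmod (u (fb j))))^2"
    by (intro power_mono pt) simp
  also have "\<dots> = (d j)^2 * (cmod (u (fa j)) + cmod (u (fb j)))^2" by (simp add: power_mult_distrib)
  also have "\<dots> \<le> (d j)^2 * (2 * (cmod (u (fa j)))^2 + 2 * (cmod (u (fb j)))^2)"
    by (intro mult_left_mono sq_sum_le) simp
  finally have a: "Fw mu (T u) j \<le> (d j)^2 * (2 * (cmod (u (fa j)))^2 + 2 * (cmod (u (fb j)))^2) * wt mu j"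
    unfolding Fw_def using wt_pos[of mu j] by (intro mult_right_mono) auto
  have b1: "(cmod (u (fa j)))^2 * wt mu j \<le> K * band (Fw mu u) m j"
    unfolding K_def by (rule term_band) (use c1 in auto)
  have b2: "(cmod (u (fb j)))^2 * wt mu j \<le> K * band (Fw mu u) m j"
    unfolding K_def by (rule term_band) (use c2 in auto)
  have "(d j)^2 * (2 * (cmod (u (fa j)))^2 + 2 * (cmod (u (fb j)))^2) * wt mu j
      = (d j)^2 * (2 * ((cmod (u (fa j)))^2 * wt mu j) + 2 * ((cmod (u (fb j)))^2 * wt mu j))"
    by (simp add: algebra_simps)
  also have "\<dots> \<le> (d j)^2 * (2 * (K * band (Fw mu u) m j) + 2 * (K * band (Fw mu u) m j))"
    using b1 b2 by (intro mult_left_mono add_mono) auto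
  also have "\<dots> = (4 * K * (d j)^2) * band (Fw mu u) m j" by (simp add: algebra_simps)
  finally show ?thesis using a unfolding K_def by linarith
qed

lemma Bnd_pt2:
  fixes d :: "nat \<Rightarrow> real"
  assumes lin: "lin T"
    and pt: "\<And>u j. cmod (T u j) \<le> d j * (cmod (u (fa j)) + cmod (u (fb j)))"
    and c1: "\<And>j. fa j < j + m" "\<And>j. j < fa j + m"
    and c2: "\<And>j. fb j < j + m" "\<And>j. j < fb j + m"
    and d0: "\<And>j. 0 \<le> d j" and dD: "\<And>j. d j \<le> D"
  shows "Bnd mu T"
proof -
  define K where "K = (real m + 1) powr (2 * \<bar>mu\<bar>)"
  have K: "0 < K" by (simp add: K_def)
  show ?thesis
  proof (rule BndI[OF lin, where C = "4 * K * D^2" and m = m])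
    show "0 \<le> 4 * K * D^2" using K by simp
    fix v j
    have "(d j)^2 \<le> D^2" using d0 dD by (intro power_mono) auto
    hence "4 * K * (d j)^2 \<le> 4 * K * D^2" using K by simp
    hence "(4 * K * (d j)^2) * band (Fw mu v) m j \<le> (4 * K * D^2) * band (Fw mu v) m j"
      by (intro mult_right_mono band_nonneg Fw_nonneg)
    thus "Fw mu (T v) j \<le> 4 * K * D^2 * band (Fw mu v) m j"
      using pt2_key[OF pt c1 c2 d0, of mu v j] unfolding K_def by linarith
  qed
qed

lemma CCo_pt2:
  fixes d :: "nat \<Rightarrow> real"
  assumes lin: "lin T"
    and pt: "\<And>u j. cmod (T u j) \<le> d j * (cmod (u (fa j)) + cmod (u (fb j)))"
    and c1: "\<And>j. fa j < j + m" "\<And>j. j < fa j + m"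
    and c2: "\<And>j. fb j < j + m" "\<And>j. j < fb j + m"
    and d0: "\<And>j. 0 \<le> d j" and dD: "\<And>j. d j \<le> D"
    and dt: "\<And>e. e > 0 \<Longrightarrow> \<exists>M. \<forall>j\<ge>M. (d j)^2 \<le> e"
  shows "CCo mu T"
proof -
  define K where "K = (real m + 1) powr (2 * \<bar>mu\<bar>)"
  have K: "0 < K" by (simp add: K_def)
  have B: "Bnd mu T" by (rule Bnd_pt2[OF lin pt c1 c2 d0 dD])
  show ?thesis
  proof (rule CCoI[OF B, where m = m])
    fix e :: real assume e: "e > 0"
    obtain M where M: "\<And>j. j \<ge> M \<Longrightarrow> (d j)^2 \<le> e / (4 * K)" using dt[of "e / (4 * K)"] e K by auto
    have "Fw mu (T v) j \<le> e * band (Fw mu v) m j" if j: "M \<le> j" for v j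
    proof -
      have "4 * K * (d j)^2 \<le> 4 * K * (e / (4 * K))" by (intro mult_left_mono M[OF j]) (use K in simp)
      also have "\<dots> = e" using K by simp
      finally have "(4 * K * (d j)^2) * band (Fw mu v) m j \<le> e * band (Fw mu v) m j"
        by (intro mult_right_mono band_nonneg Fw_nonneg)
      thus ?thesis using pt2_key[OF pt c1 c2 d0, of mu v j] unfolding K_def by linarith
    qed
    thus "\<exists>M. \<forall>v j. M \<le> j \<longrightarrow> Fw mu (T v) j \<le> e * band (Fw mu v) m j" by blast
  qed
qed

lemma lin_Sop: "lin (Sop l)"
  unfolding lin_def
proof (intro allI ext)
  fix u v :: cseq and c :: complex and j :: nat
  show "Sop l (\<lambda>k. c * u k + v k) j = c * Sop l u j + Sop l v j"
  proof (cases "l = 0")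
    case True
    show ?thesis
    proof (cases "j = 0")
      case True
      have "c * u 0 + v 0 - (c * u 2 + v 2) / 2 = c * (u 0 - u 2 / 2) + (v 0 - v 2 / 2)"
        by (simp add: field_simps)
      thus ?thesis using True \<open>l = 0\<close> by (simp add: Sop_def)
    next
      case False
      have "(c * u j + v j - (c * u (j + 2) + v (j + 2))) / 2 = c * ((u j - u (j + 2)) / 2) + (v j - v (j + 2)) / 2"
        by (simp add: field_simps)
      thus ?thesis using False \<open>l = 0\<close> by (simp add: Sop_def)
    qed
  next
    case False
    define A where "A = complex_of_real (real l / real (l + j))"
    define B where "B = complex_of_real (real l / real (l + j + 2))"
    have e: "Sop l w j = A * w j - B * w (j + 2)" for w using False by (simp add: Sop_def A_def B_def)
    show ?thesis unfolding e by (simp add: algebra_simps)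
  qed
qed

lemma Bnd_cmul: "Bnd mu (\<lambda>v k. c * v k)"
  by (rule Bnd_pt2[where d = "\<lambda>_. cmod c" and fa = id and fb = id and m = 1 and D = "cmod c"])
     (auto simp: lin_def algebra_simps norm_mult)

lemma Bnd_id: "Bnd mu (\<lambda>a. a)"
  using Bnd_cmul[of mu 1] by (simp add: id_def)

lemma cmod_al: "cmod (al l k) \<le> 1" by (simp add: al_def ar_bound)
lemma cmod_be: "cmod (be l k) \<le> 1" by (simp add: be_def br_bound)

lemma Bnd_Ax: "Bnd mu (Ax l)"
proof (rule Bnd_pt2[where d = "\<lambda>_. 1" and fa = "\<lambda>j. j - 1" and fb = Suc and m = 2 and D = 1])
  show "lin (Ax l)" by (auto simp: lin_def Ax_def algebra_simps)
  fix u j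
  have a: "cmod (be l (Suc j) * u (Suc j)) \<le> cmod (u (Suc j))"
    using cmod_be[of l "Suc j"] by (simp add: norm_mult mult_left_le_one_le)
  have b: "cmod (al l (j - 1) * u (j - 1)) \<le> cmod (u (j - 1))"
    using cmod_al[of l "j - 1"] by (simp add: norm_mult mult_left_le_one_le)
  show "cmod (Ax l u j) \<le> 1 * (cmod (u (j - 1)) + cmod (u (Suc j)))"
  proof (cases "j = 0")
    case True
    hence e: "Ax l u j = be l (Suc j) * u (Suc j)" by (simp add: Ax_def)
    show ?thesis unfolding e mult.left_neutral using a norm_ge_zero[of "u (j - 1)"] by linarith
  next
    case False
    hence "Ax l u j = al l (j - 1) * u (j - 1) + be l (Suc j) * u (Suc j)" by (simp add: Ax_def)
    thus ?thesis using a b norm_triangle_ineq[of "al l (j - 1) * u (j - 1)" "be l (Suc j) * u (Suc j)"] by simp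
  qed
qed auto

lemma Bnd_Sop0: "Bnd mu (Sop 0)"
proof (rule Bnd_pt2[where d = "\<lambda>_. 1" and fa = id and fb = "\<lambda>j. j + 2" and m = 3 and D = 1])
  show "lin (Sop 0)" by (rule lin_Sop)
  fix u j
  show "cmod (Sop 0 u j) \<le> 1 * (cmod (u (id j)) + cmod (u (j + 2)))"
  proof (cases "j = 0")
    case True
    have "cmod (u 0 - u 2 / 2) \<le> cmod (u 0) + cmod (u 2 / 2)" by (rule norm_triangle_ineq4)
    also have "\<dots> \<le> cmod (u 0) + cmod (u 2)" by (simp add: norm_divide)
    finally have h: "cmod (u 0 - u 2 / 2) \<le> cmod (u 0) + cmod (u 2)" .
    have e1: "Sop 0 u j = u 0 - u 2 / 2" using True by (simp add: Sop_def)
    have e2: "u (j + 2) = u 2" using True by (simp add: numeral_2_eq_2)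
    show ?thesis unfolding e1 e2 using True h by simp
  next
    case False
    have "cmod ((u j - u (j + 2)) / 2) \<le> cmod (u j - u (j + 2))" by (simp add: norm_divide)
    also have "\<dots> \<le> cmod (u j) + cmod (u (j + 2))" by (rule norm_triangle_ineq4)
    finally show ?thesis using False by (simp add: Sop_def)
  qed
qed auto

lemma CCo_Sop:
  assumes l: "l \<ge> 1"
  shows "CCo mu (Sop l)"
proof -
  define d where "d j = real l / (real l + real j)" for j
  have lin: "lin (Sop l)" by (rule lin_Sop)
  have pt: "cmod (Sop l u j) \<le> d j * (cmod (u j) + cmod (u (j + 2)))" for u j
  proof -
    have "cmod (Sop l u j) \<le> cmod (complex_of_real (real l / real (l + j)) * u j)
        + cmod (complex_of_real (real l / real (l + j + 2)) * u (j + 2))"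
      unfolding Sop_def using l by (simp add: norm_triangle_ineq4)
    also have "\<dots> = d j * cmod (u j) + real l / (real l + real j + 2) * cmod (u (j + 2))"
    proof -
      have n1: "cmod (complex_of_real (real l / real (l + j)) * u j) = d j * cmod (u j)"
        unfolding norm_mult norm_of_real d_def by simp
      have n2: "cmod (complex_of_real (real l / real (l + j + 2)) * u (j + 2)) = real l / (real l + real j + 2) * cmod (u (j + 2))"
        unfolding norm_mult norm_of_real by simp
      show ?thesis by (simp only: n1 n2)
    qed
    also have "real l / (real l + real j + 2) \<le> d j" unfolding d_def using l
      by (intro divide_left_mono) auto
    hence "d j * cmod (u j) + real l / (real l + real j + 2) * cmod (u (j + 2)) \<le> d j * cmod (u j) + d j * cmod (u (j + 2))"
      by (intro add_left_mono mult_right_mono) auto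
    finally show ?thesis by (simp add: algebra_simps)
  qed
  have d0: "0 \<le> d j" for j by (simp add: d_def)
  have dD: "d j \<le> 1" for j using l by (simp add: d_def)
  have dt: "\<exists>M. \<forall>j\<ge>M. (d j)^2 \<le> e" if e: "e > 0" for e
  proof -
    define M where "M = nat \<lceil>(real l)^2 / e\<rceil>"
    have "(d j)^2 \<le> e" if j: "j \<ge> M" for j
    proof -
      have jM: "(real l)^2 / e \<le> real j" using j unfolding M_def by linarith
      have "(d j)^2 = (real l)^2 / (real l + real j)^2" by (simp add: d_def power_divide)
      also have "\<dots> \<le> (real l)^2 / (real j + 1)"
      proof (rule divide_left_mono)
        have "real j + 1 \<le> real l + real j" using l by simp
        also have "\<dots> \<le> (real l + real j)^2" using l by (simp add: power2_eq_square)
        finally show "real j + 1 \<le> (real l + real j)^2" .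
        show "0 < (real l + real j)^2 * (real j + 1)" using l by (intro mult_pos_pos) auto
      qed auto
      also have "\<dots> \<le> e"
      proof -
        have "(real l)^2 \<le> e * real j" using jM e by (simp add: divide_le_eq mult.commute)
        hence "(real l)^2 \<le> e * (real j + 1)" using e by (smt (verit) mult_left_mono)
        thus ?thesis by (simp add: divide_le_eq)
      qed
      finally show ?thesis .
    qed
    thus ?thesis by blast
  qed
  show ?thesis
    by (rule CCo_pt2[OF lin pt _ _ _ _ d0 dD dt, where m = 3]) auto
qed

definition Sh :: "nat \<Rightarrow> cseq \<Rightarrow> cseq" where "Sh N u j = (if j < N then 0 else u (j - N))"

lemma Bnd_Sh: "Bnd mu (Sh N)"
  by (rule Bnd_pt2[where d = "\<lambda>_. 1" and fa = "\<lambda>j. j - N" and fb = "\<lambda>j. j - N" and m = "Suc N" and D = 1])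
     (auto simp: lin_def Sh_def)

lemma Bnd_Mop: "Bnd mu (Mop l a)"
proof (induction a rule: pCons_induct)
  case 0
  have "Mop l 0 = (\<lambda>v k. 0)" by (rule ext) (simp add: Mop_0)
  thus ?case using CCo_Bnd[OF CCo_zero] by simp
next
  case (pCons c a)
  have "Bnd mu (\<lambda>v k. c * v k + (Ax l \<circ> Mop l a) v k)"
    by (rule Bnd_add[OF Bnd_cmul Bnd_comp[OF Bnd_Ax pCons.IH]])
  moreover have "Mop l (pCons c a) = (\<lambda>v k. c * v k + (Ax l \<circ> Mop l a) v k)"
    by (rule ext) (simp add: Mop_pCons)
  ultimately show ?case by simp
qed

lemma Bnd_Sop: "Bnd mu (Sop l)"
proof (cases "l = 0")
  case True then show ?thesis by (simp add: Bnd_Sop0)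
next
  case False then show ?thesis by (intro CCo_Bnd CCo_Sop) simp
qed

lemma Bnd_Schain: "Bnd mu (Schain lo n)"
proof (induction n)
  case 0 then show ?case using Bnd_id by (simp add: id_def)
next
  case (Suc n) then show ?case unfolding Schain.simps(2) by (rule Bnd_comp[OF Bnd_Sop])
qed

lemma CCo_Schain: "lo \<ge> 1 \<Longrightarrow> CCo mu (Schain lo (Suc n))"
  unfolding Schain.simps(2) by (rule CCo_comp2[OF CCo_Sop Bnd_Schain]) simp


definition rN :: "nat \<Rightarrow> real" where "rN N = 1 / (2 ^ (N - 1) * fact (N - 1))"

lemma rN_pos: "0 < rN N" by (simp add: rN_def)

lemma Rop_eq: "Rop N u j = complex_of_real (rN N) * (if j < N then u j else u j / of_nat j)"
  by (simp add: Rop_def rN_def)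

lemma lin_Rop: "lin (Rop N)"
  unfolding lin_def by (intro allI ext) (simp add: Rop_def algebra_simps add_divide_distrib)

lemma cmod_Rop: "cmod (Rop N u j) = rN N * (if j < N then 1 else 1 / real j) * cmod (u j)"
  using rN_pos[of N] by (simp add: Rop_eq norm_mult norm_divide)

lemma CCo_Rop:
  assumes N: "N \<ge> 1"
  shows "CCo mu (Rop N)"
proof -
  define d where "d j = rN N * (if j < N then 1 else 1 / real j)" for j
  have r: "0 < rN N" by (rule rN_pos)
  have d0: "0 \<le> d j" for j using r by (simp add: d_def)
  have dD: "d j \<le> rN N" for j
  proof (cases "j < N")
    case False
    hence "1 \<le> real j" using N by simp
    hence "1 / real j \<le> 1" by simp
    hence "rN N * (1 / real j) \<le> rN N * 1" using r by (intro mult_left_mono) auto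
    thus ?thesis using False by (simp add: d_def)
  qed (simp add: d_def)
  have pt: "cmod (Rop N u j) \<le> d j * (cmod (u (id j)) + cmod (u (id j)))" for u j
    using d0[of j] by (simp add: cmod_Rop d_def[symmetric] algebra_simps)
  have dt: "\<exists>M. \<forall>j\<ge>M. (d j)^2 \<le> e" if e: "e > 0" for e
  proof -
    define M where "M = max N (nat \<lceil>(rN N)^2 / e\<rceil> + 1)"
    have "(d j)^2 \<le> e" if j: "j \<ge> M" for j
    proof -
      have jN: "\<not> j < N" using j by (simp add: M_def)
      have j1: "(rN N)^2 / e \<le> real j" using j unfolding M_def by linarith
      have jp: "0 < real j" using j by (simp add: M_def)
      have "(d j)^2 = (rN N)^2 / (real j)^2" using jN by (simp add: d_def power_divide)
      also have "\<dots> \<le> (rN N)^2 / real j"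
      proof (rule divide_left_mono)
        have "1 \<le> real j" using jp j unfolding M_def by linarith
        thus "real j \<le> (real j)^2" by (simp add: power2_eq_square)
      qed (use jp in auto)
      also have "\<dots> \<le> e" using j1 e jp by (simp add: divide_le_eq mult.commute)
      finally show ?thesis .
    qed
    thus ?thesis by blast
  qed
  show ?thesis
    by (rule CCo_pt2[OF lin_Rop pt _ _ _ _ d0 dD dt, where m = 1]) auto
qed

lemma lin_DR: "lin (Dop l \<circ> Rop N)"
  unfolding lin_def by (intro allI ext) (simp add: Dop_def Rop_def algebra_simps add_divide_distrib)

lemma Bnd_DR:
  assumes N: "N \<ge> 1"
  shows "Bnd mu (Dop l \<circ> Rop N)"
proof -
  define cl where "cl = 2 ^ (l - 1) * fact (l - 1) * rN N * real N"
  have cl0: "0 \<le> cl" using rN_pos[of N] by (simp add: cl_def)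
  have pt: "cmod ((Dop l \<circ> Rop N) u j) \<le> cl * (cmod (u (j + l)) + cmod (u (j + l)))" for u j
  proof -
    have a: "real (j + l) * (if j + l < N then 1 else 1 / real (j + l)) \<le> real N"
    proof (cases "j + l < N")
      case True then show ?thesis by simp
    next
      case False
      hence "0 < real (j + l)" using N by simp
      hence "real (j + l) * (1 / real (j + l)) = 1" by simp
      thus ?thesis using False N by simp
    qed
    have "cmod ((Dop l \<circ> Rop N) u j) = \<bar>2 ^ (l - 1) * fact (l - 1) * real (j + l)\<bar> * cmod (Rop N u (j + l))"
      by (simp only: comp_def Dop_def norm_mult norm_of_real)
    also have "\<dots> = 2 ^ (l - 1) * fact (l - 1) * (real (j + l) * (rN N * (if j + l < N then 1 else 1 / real (j + l)) * cmod (u (j + l))))"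
      by (simp only: cmod_Rop abs_mult abs_of_nonneg[OF zero_le_power[of 2 "l - 1"]] abs_of_nonneg[OF fact_ge_zero] abs_of_nonneg[OF of_nat_0_le_iff] mult.assoc)
    also have "\<dots> = 2 ^ (l - 1) * fact (l - 1) * rN N * cmod (u (j + l)) * (real (j + l) * (if j + l < N then 1 else 1 / real (j + l)))"
      by (simp add: algebra_simps)
    also have "\<dots> \<le> 2 ^ (l - 1) * fact (l - 1) * rN N * cmod (u (j + l)) * real N"
      using rN_pos[of N] by (intro mult_left_mono a) auto
    finally have h: "cmod ((Dop l \<circ> Rop N) u j) \<le> 2 ^ (l - 1) * fact (l - 1) * rN N * cmod (u (j + l)) * real N" .
    have nn: "0 \<le> 2 ^ (l - 1) * fact (l - 1) * rN N * cmod (u (j + l)) * real N" using rN_pos[of N] by simp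
    have e: "cl * (cmod (u (j + l)) + cmod (u (j + l))) = 2 * (2 ^ (l - 1) * fact (l - 1) * rN N * cmod (u (j + l)) * real N)"
      by (simp add: cl_def algebra_simps)
    show ?thesis unfolding e using h nn by linarith
  qed
  show ?thesis
    by (rule Bnd_pt2[OF lin_DR pt _ _ _ _ _ order_refl, where m = "Suc l"]) (use cl0 in auto)
qed

lemma Dop_Rop_N:
  assumes N: "N \<ge> 1" and j: "N \<le> j"
  shows "Dop N (Rop N u) (j - N) = u j"
proof -
  have jp: "j \<noteq> 0" using N j by simp
  define c where "c = (2::real) ^ (N - 1) * fact (N - 1)"
  have c: "c \<noteq> 0" by (simp add: c_def)
  have "Dop N (Rop N u) (j - N) = complex_of_real (c * real j) * (complex_of_real (1 / c) * (u j / of_nat j))"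
    using j by (simp add: Dop_def Rop_def c_def)
  also have "\<dots> = u j" using c jp by (simp add: field_simps)
  finally show ?thesis .
qed


lemma in_l2_add:
  assumes "in_l2 mu a" "in_l2 mu b"
  shows "in_l2 mu (\<lambda>k. a k + b k) \<and> suminf (Fw mu (\<lambda>k. a k + b k)) \<le> 2 * suminf (Fw mu a) + 2 * suminf (Fw mu b)"
proof -
  have sa: "summable (Fw mu a)" and sb: "summable (Fw mu b)" using assms by (auto simp: in_l2_Fw)
  have s2: "summable (\<lambda>j. 2 * Fw mu a j + 2 * Fw mu b j)" by (intro summable_add summable_mult sa sb)
  have s: "summable (Fw mu (\<lambda>k. a k + b k))"
    by (rule summable_comparison_test'[OF s2, of 0]) (use Fw_add Fw_nonneg in auto)
  have "suminf (Fw mu (\<lambda>k. a k + b k)) \<le> suminf (\<lambda>j. 2 * Fw mu a j + 2 * Fw mu b j)"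
    by (rule suminf_le[OF Fw_add s s2])
  also have "\<dots> = 2 * suminf (Fw mu a) + 2 * suminf (Fw mu b)"
    using sa sb by (simp add: suminf_add[symmetric] suminf_mult summable_mult)
  finally show ?thesis using s by (simp add: in_l2_Fw)
qed

lemma in_l2_cmul: "in_l2 mu a \<Longrightarrow> in_l2 mu (\<lambda>k. c * a k)"
proof -
  assume "in_l2 mu a"
  hence "summable (\<lambda>k. (cmod c)^2 * Fw mu a k)" by (intro summable_mult) (simp add: in_l2_Fw)
  moreover have "Fw mu (\<lambda>k. c * a k) = (\<lambda>k. (cmod c)^2 * Fw mu a k)"
    by (rule ext) (simp add: Fw_def norm_mult power_mult_distrib)
  ultimately show ?thesis by (simp add: in_l2_Fw)
qed

lemma in_l2_diff: "in_l2 mu a \<Longrightarrow> in_l2 mu b \<Longrightarrow> in_l2 mu (\<lambda>k. a k - b k) \<and>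
   suminf (Fw mu (\<lambda>k. a k - b k)) \<le> 2 * suminf (Fw mu a) + 2 * suminf (Fw mu b)"
proof -
  assume a: "in_l2 mu a" and b: "in_l2 mu b"
  have b': "in_l2 mu (\<lambda>k. (-1) * b k)" using in_l2_cmul[OF b] .
  have e: "Fw mu (\<lambda>k. (-1) * b k) = Fw mu b" by (rule ext) (simp add: Fw_def)
  have e2: "Fw mu (\<lambda>k. - b k) = Fw mu b" by (rule ext) (simp add: Fw_def)
  from in_l2_add[OF a b'] show ?thesis by (simp add: e e2)
qed

lemma in_l2_fin:
  assumes "\<And>j. N \<le> j \<Longrightarrow> a j = 0"
  shows "in_l2 mu a \<and> suminf (Fw mu a) = (\<Sum>j<N. Fw mu a j)"
proof -
  have z: "\<And>j. j \<notin> {..<N} \<Longrightarrow> Fw mu a j = 0" using assms by (auto simp: Fw_def)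
  have "summable (Fw mu a)" by (rule summable_finite[of "{..<N}", OF _ z]) simp_all
  moreover have "suminf (Fw mu a) = (\<Sum>j<N. Fw mu a j)" by (rule suminf_finite[of "{..<N}", OF _ z]) simp_all
  ultimately show ?thesis by (simp add: in_l2_Fw)
qed

lemma Fw_le_suminf: "in_l2 mu a \<Longrightarrow> Fw mu a k \<le> suminf (Fw mu a)"
proof -
  assume "in_l2 mu a"
  hence "sum (Fw mu a) {k} \<le> suminf (Fw mu a)" by (intro sum_le_suminf) (auto simp: in_l2_Fw Fw_nonneg)
  thus ?thesis by simp
qed

lemma DIAG:
  fixes z :: "nat \<Rightarrow> nat \<Rightarrow> complex"
  assumes b: "\<And>i. bounded (range (\<lambda>n. z n i))"
  shows "\<exists>r. strict_mono r \<and> (\<forall>i. convergent (\<lambda>n. z (r n) i))"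
proof -
  interpret subseqs "\<lambda>i s. convergent (\<lambda>n. z (s n) i)"
  proof
    fix i and s :: "nat \<Rightarrow> nat" assume s: "strict_mono s"
    have "bounded (range (\<lambda>n. z (s n) i))" by (rule bounded_subset[OF b[of i]]) auto
    then obtain l r' where r': "strict_mono r'" "((\<lambda>n. z (s n) i) \<circ> r') \<longlonglongrightarrow> l"
      using bounded_imp_convergent_subsequence by blast
    thus "\<exists>r'. strict_mono r' \<and> convergent (\<lambda>n. z ((s \<circ> r') n) i)"
      by (auto simp: convergent_def comp_def)
  qed
  have "convergent (\<lambda>n. z (diagseq n) i)" for i
  proof -
    have "convergent (\<lambda>n. z ((diagseq \<circ> (+) (Suc i)) n) i)"
    proof (rule diagseq_holds)
      fix r s n assume r: "strict_mono (r :: nat \<Rightarrow> nat)" and c: "convergent (\<lambda>m. z (s m) n)"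
      then obtain L where "(\<lambda>m. z (s m) n) \<longlonglongrightarrow> L" by (auto simp: convergent_def)
      from LIMSEQ_subseq_LIMSEQ[OF this r] show "convergent (\<lambda>m. z ((s \<circ> r) m) n)"
        by (auto simp: convergent_def comp_def)
    qed
    then obtain L where "(\<lambda>n. z (diagseq (Suc i + n)) i) \<longlonglongrightarrow> L" by (auto simp: convergent_def comp_def)
    hence "(\<lambda>n. z (diagseq (n + Suc i)) i) \<longlonglongrightarrow> L" by (simp add: add.commute)
    from LIMSEQ_offset[OF this] show ?thesis by (auto simp: convergent_def)
  qed
  thus ?thesis using subseq_diagseq by blast
qed

lemma Rop_D:
  assumes N: "N \<ge> 1" and mu: "D - 1 \<le> mu"
  shows "Fw D (Rop N u) j \<le> (rN N)^2 * ((real N)^2 + 4) * Fw mu u j"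
proof -
  define f where "f = (if j < N then 1 else 1 / real j)"
  have c: "(cmod (Rop N u j))^2 = (rN N)^2 * f^2 * (cmod (u j))^2"
    by (simp add: cmod_Rop f_def power_mult_distrib)
  have w: "wt D j \<le> wt mu j * (real j + 1)^2"
  proof -
    have "wt D j = (real j + 1) powr (2 * mu) * (real j + 1) powr (2 * D - 2 * mu)"
      unfolding wt_def by (simp add: powr_add[symmetric])
    also have "(real j + 1) powr (2 * D - 2 * mu) \<le> (real j + 1) powr (real 2)"
      by (rule powr_mono) (use mu in auto)
    also have "(real j + 1) powr (real 2) = (real j + 1)^2" by (rule powr_realpow) simp
    finally show ?thesis by (simp add: wt_def mult_left_mono)
  qed
  have fb: "f^2 * (real j + 1)^2 \<le> (real N)^2 + 4"
  proof (cases "j < N")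
    case True
    have h: "(real j + 1)^2 \<le> (real N)^2" using True by (intro power_mono) auto
    have "f^2 * (real j + 1)^2 = (real j + 1)^2" using True by (simp add: f_def)
    thus ?thesis using h by linarith
  next
    case False
    hence jp: "0 < real j" "real N \<le> real j" using N by auto
    have "(real j + 1) \<le> 2 * real j" using jp N by linarith
    hence "(real j + 1)^2 \<le> (2 * real j)^2" by (intro power_mono) auto
    hence h: "(real j + 1)^2 / (real j)^2 \<le> 4" using jp by (simp add: divide_le_eq power_mult_distrib)
    have "f^2 * (real j + 1)^2 = (real j + 1)^2 / (real j)^2" using False by (simp add: f_def power_divide)
    moreover have "0 \<le> (real N)^2" by simp
    ultimately show ?thesis using h by linarith
  qed
  have "Fw D (Rop N u) j = (rN N)^2 * f^2 * (cmod (u j))^2 * wt D j" by (simp add: Fw_def c)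
  also have "\<dots> \<le> (rN N)^2 * f^2 * (cmod (u j))^2 * (wt mu j * (real j + 1)^2)"
    by (intro mult_left_mono w) simp
  also have "\<dots> = (rN N)^2 * (f^2 * (real j + 1)^2) * Fw mu u j" by (simp add: Fw_def algebra_simps)
  also have "\<dots> \<le> (rN N)^2 * ((real N)^2 + 4) * Fw mu u j"
    by (intro mult_left_mono mult_right_mono fb Fw_nonneg) simp
  finally show ?thesis .
qed

lemma Rop_D_l2:
  assumes N: "N \<ge> 1" and mu: "D - 1 \<le> mu" and u: "in_l2 mu u"
  shows "in_l2 D (Rop N u) \<and> suminf (Fw D (Rop N u)) \<le> (rN N)^2 * ((real N)^2 + 4) * suminf (Fw mu u)"
proof -
  have s: "summable (Fw mu u)" using u by (simp add: in_l2_Fw)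
  have s2: "summable (\<lambda>j. (rN N)^2 * ((real N)^2 + 4) * Fw mu u j)" by (rule summable_mult[OF s])
  have s1: "summable (Fw D (Rop N u))"
    by (rule summable_comparison_test'[OF s2, of 0]) (use Rop_D[OF N mu] Fw_nonneg in auto)
  have "suminf (Fw D (Rop N u)) \<le> suminf (\<lambda>j. (rN N)^2 * ((real N)^2 + 4) * Fw mu u j)"
    by (rule suminf_le[OF _ s1 s2]) (rule Rop_D[OF N mu])
  also have "\<dots> = (rN N)^2 * ((real N)^2 + 4) * suminf (Fw mu u)" using s by (rule suminf_mult)
  finally show ?thesis using s1 by (simp add: in_l2_Fw)
qed


lemma Bsingle:
  fixes x :: "nat \<Rightarrow> complex" and i N :: nat
  shows "i < N \<Longrightarrow> cmod (x i) \<le> sqrt (\<Sum>i<N. (cmod (x i))^2)"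
proof -
  assume i: "i < N"
  have "(cmod (x i))^2 \<le> (\<Sum>i<N. (cmod (x i))^2)" by (rule member_le_sum) (auto simp: i)
  hence "sqrt ((cmod (x i))^2) \<le> sqrt (\<Sum>i<N. (cmod (x i))^2)" by (rule real_sqrt_le_mono)
  thus ?thesis by simp
qed

theorem lemma4p3:
  fixes N :: nat and a :: "nat \<Rightarrow> complex poly" and B :: "cseq \<Rightarrow> cseq" and D :: int
  assumes N: "N \<ge> 1"
    and B_linear: "\<And>u v c i. in_l2 (of_int D) u \<Longrightarrow> in_l2 (of_int D) v \<Longrightarrow> i < N \<Longrightarrow>
                      B (\<lambda>k. c * u k + v k) i = c * B u i + B v i"
    and B_bounded: "\<exists>C. \<forall>u. in_l2 (of_int D) u \<longrightarrow>
                      sqrt (\<Sum>i<N. (cmod (B u i))^2) \<le> C * l2norm (of_int D) u"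
  shows "\<forall>lam::int. lam \<ge> D - 1 \<longrightarrow>
           compact_op_l2 (of_int lam) (\<lambda>u k. blockop N B (Lop N a) (Rop N u) k - u k)"
proof (intro allI impI)
  fix lam :: int assume lam: "lam \<ge> D - 1"
  define mu :: real where "mu = of_int lam"
  have muD: "real_of_int D - 1 \<le> mu" using lam unfolding mu_def by linarith
  define LOW where "LOW = (\<lambda>u i. (\<Sum>l\<in>{1..N-1}. Schain l (N - l) (Mop l (a l) (Dop l (Rop N u))) i)
                          + Schain 0 N (Mop 0 (a 0) (Rop N u)) i)"
  define Lp where "Lp = (\<lambda>u. Sh N (LOW u))"
  define P where "P = (\<lambda>u j. if j < N then B (Rop N u) j - u j else 0)"
  define K where "K = (\<lambda>u k. blockop N B (Lop N a) (Rop N u) k - u k)"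
  have Kdec: "K u = (\<lambda>j. P u j + Lp u j)" for u
  proof (rule ext)
    fix j show "K u j = P u j + Lp u j"
    proof (cases "j < N")
      case True then show ?thesis by (simp add: K_def blockop_def P_def Lp_def Sh_def)
    next
      case False
      have "Lop N a (Rop N u) (j - N) = Dop N (Rop N u) (j - N) + LOW u (j - N)"
        by (simp add: Lop_def LOW_def add.assoc)
      moreover have "Dop N (Rop N u) (j - N) = u j" using Dop_Rop_N[OF N] False by simp
      ultimately show ?thesis using False by (simp add: K_def blockop_def P_def Lp_def Sh_def)
    qed
  qed
  have T1: "CCo mu (\<lambda>v k. Schain l (N - l) (Mop l (a l) (Dop l (Rop N v))) k)" if l: "l \<in> {1..N-1}" for l
  proof -
    have l1: "l \<ge> 1" and eq: "Suc (N - l - 1) = N - l" using l by auto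
    have c: "CCo mu (Schain l (Suc (N - l - 1)) \<circ> (Mop l (a l) \<circ> (Dop l \<circ> Rop N)))"
      by (rule CCo_comp2[OF CCo_Schain[OF l1] Bnd_comp[OF Bnd_Mop Bnd_DR[OF N]]])
    have e: "Schain l (Suc (N - l - 1)) \<circ> (Mop l (a l) \<circ> (Dop l \<circ> Rop N)) =
         (\<lambda>v k. Schain l (N - l) (Mop l (a l) (Dop l (Rop N v))) k)"
      unfolding eq by (simp add: comp_def)
    show ?thesis using c unfolding e .
  qed
  have T0: "CCo mu (\<lambda>v k. Schain 0 N (Mop 0 (a 0) (Rop N v)) k)"
  proof -
    have c: "CCo mu ((Schain 0 N \<circ> Mop 0 (a 0)) \<circ> Rop N)"
      by (rule CCo_comp1[OF Bnd_comp[OF Bnd_Schain Bnd_Mop] CCo_Rop[OF N]])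
    have e: "(Schain 0 N \<circ> Mop 0 (a 0)) \<circ> Rop N = (\<lambda>v k. Schain 0 N (Mop 0 (a 0) (Rop N v)) k)"
      by (simp add: comp_def)
    show ?thesis using c unfolding e .
  qed
  have LOW_CCo: "CCo mu LOW"
  proof -
    have "CCo mu (\<lambda>v k. (\<lambda>v k. \<Sum>l\<in>{1..N-1}. Schain l (N - l) (Mop l (a l) (Dop l (Rop N v))) k) v k
                      + (\<lambda>v k. Schain 0 N (Mop 0 (a 0) (Rop N v)) k) v k)"
      by (rule CCo_add[OF CCo_sum[OF _ T1] T0]) simp_all
    thus ?thesis unfolding LOW_def by simp
  qed
  have Lp_CCo: "CCo mu Lp"
  proof -
    have c: "CCo mu (Sh N \<circ> LOW)" by (rule CCo_comp1[OF Bnd_Sh LOW_CCo])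
    have e: "Sh N \<circ> LOW = Lp" by (simp add: Lp_def comp_def)
    show ?thesis using c unfolding e .
  qed
  have Lp_lin: "lin Lp" by (rule Bnd_lin[OF CCo_Bnd[OF Lp_CCo]])
  have Lp_l2: "in_l2 mu u \<Longrightarrow> in_l2 mu (Lp u)" for u by (rule Bnd_in_l2[OF CCo_Bnd[OF Lp_CCo]])
  obtain CB where CB: "\<And>u. in_l2 (of_int D) u \<Longrightarrow> sqrt (\<Sum>i<N. (cmod (B u i))^2) \<le> CB * l2norm (of_int D) u"
    using B_bounded by blast
  define CR where "CR = (rN N)^2 * ((real N)^2 + 4)"
  have CR0: "0 \<le> CR" by (simp add: CR_def)
  have RopD: "in_l2 mu u \<Longrightarrow> in_l2 (of_int D) (Rop N u) \<and> suminf (Fw (of_int D) (Rop N u)) \<le> CR * suminf (Fw mu u)" for u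
    unfolding CR_def by (rule Rop_D_l2[OF N muD])
  have Bbound: "cmod (B (Rop N u) i) \<le> \<bar>CB\<bar> * sqrt (CR * suminf (Fw mu u))" if u: "in_l2 mu u" and i: "i < N" for u i
  proof -
    have r: "in_l2 (of_int D) (Rop N u)" and rb: "suminf (Fw (of_int D) (Rop N u)) \<le> CR * suminf (Fw mu u)"
      using RopD[OF u] by auto
    have "cmod (B (Rop N u) i) \<le> sqrt (\<Sum>i<N. (cmod (B (Rop N u) i))^2)" by (rule Bsingle[OF i])
    also have "\<dots> \<le> CB * l2norm (of_int D) (Rop N u)" by (rule CB[OF r])
    also have "\<dots> \<le> \<bar>CB\<bar> * l2norm (of_int D) (Rop N u)"
    proof (rule mult_right_mono)
      show "0 \<le> l2norm (of_int D) (Rop N u)" unfolding l2norm_Fw using r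
        by (auto intro!: real_sqrt_ge_zero suminf_nonneg simp: in_l2_Fw Fw_nonneg)
    qed simp
    also have "\<dots> \<le> \<bar>CB\<bar> * sqrt (CR * suminf (Fw mu u))"
      unfolding l2norm_Fw by (intro mult_left_mono real_sqrt_le_mono rb) simp
    finally show ?thesis .
  qed
  have Pfin: "\<And>u j. N \<le> j \<Longrightarrow> P u j = 0" by (simp add: P_def)
  have "compact_op_l2 mu K"
    unfolding compact_op_l2_def
  proof (intro conjI allI impI)
    fix u assume u: "in_l2 mu u"
    have "in_l2 mu (\<lambda>j. P u j + Lp u j)"
    proof -
      have "in_l2 mu (P u)" using in_l2_fin[of N "P u" mu] Pfin by blast
      from in_l2_add[OF this Lp_l2[OF u]] show ?thesis by blast
    qed
    thus "in_l2 mu (K u)" by (simp add: Kdec)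
  next
    fix u v :: cseq and c :: complex assume u: "in_l2 mu u" and v: "in_l2 mu v"
    have linLp: "Lp (\<lambda>k. c * u k + v k) = (\<lambda>k. c * Lp u k + Lp v k)" using Lp_lin unfolding lin_def by blast
    have linR: "Rop N (\<lambda>k. c * u k + v k) = (\<lambda>k. c * Rop N u k + Rop N v k)" using lin_Rop unfolding lin_def by blast
    have ru: "in_l2 (of_int D) (Rop N u)" and rv: "in_l2 (of_int D) (Rop N v)" using RopD u v by auto
    show "K (\<lambda>k. c * u k + v k) = (\<lambda>k. c * K u k + K v k)"
    proof (rule ext)
      fix j show "K (\<lambda>k. c * u k + v k) j = c * K u j + K v j"
      proof (cases "j < N")
        case True
        have Lpz: "Lp w j = 0" for w using True by (simp add: Lp_def Sh_def)
        have e: "B (Rop N (\<lambda>k. c * u k + v k)) j = c * B (Rop N u) j + B (Rop N v) j"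
          unfolding linR by (rule B_linear[OF ru rv True])
        show ?thesis using True by (simp add: Kdec P_def e Lpz) (simp add: algebra_simps)
      next
        case False
        thus ?thesis by (simp add: Kdec P_def linLp)
      qed
    qed
  next
    fix us :: "nat \<Rightarrow> cseq"
    assume l2: "\<forall>n. in_l2 mu (us n)" and bdd: "bounded (range (\<lambda>n. l2norm mu (us n)))"
    obtain Bd where Bd: "\<And>n. \<bar>l2norm mu (us n)\<bar> \<le> Bd" using bdd unfolding bounded_iff by auto
    have sum_us: "summable (Fw mu (us n))" for n using l2 by (simp add: in_l2_Fw)
    have Q0: "0 \<le> suminf (Fw mu (us n))" for n by (intro suminf_nonneg sum_us Fw_nonneg)
    have Qb: "suminf (Fw mu (us n)) \<le> Bd^2" for n
    proof -
      have "sqrt (suminf (Fw mu (us n))) \<le> Bd" using Bd[of n] by (simp add: l2norm_Fw)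
      moreover have "0 \<le> sqrt (suminf (Fw mu (us n)))" using Q0[of n] by simp
      ultimately have "(sqrt (suminf (Fw mu (us n))))^2 \<le> Bd^2" by (rule power_mono)
      thus ?thesis using Q0[of n] by simp
    qed
    have cb: "cmod (us n k) \<le> sqrt (Bd^2 / wt mu k)" for n k
    proof (rule real_le_rsqrt)
      have "(cmod (us n k))^2 * wt mu k \<le> Bd^2"
        using Fw_le_suminf[of mu "us n" k] l2 Qb[of n] by (simp add: Fw_def)
      thus "(cmod (us n k))^2 \<le> Bd^2 / wt mu k" using wt_pos[of mu k] by (simp add: pos_le_divide_eq)
    qed
    define PB where "PB j = \<bar>CB\<bar> * sqrt (CR * Bd^2) + sqrt (Bd^2 / wt mu j)" for j
    have pb: "cmod (P (us n) j) \<le> PB j" for n j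
    proof (cases "j < N")
      case True
      have "cmod (B (Rop N (us n)) j) \<le> \<bar>CB\<bar> * sqrt (CR * suminf (Fw mu (us n)))"
        using Bbound l2 True by blast
      also have "\<dots> \<le> \<bar>CB\<bar> * sqrt (CR * Bd^2)"
        by (intro mult_left_mono real_sqrt_le_mono mult_left_mono Qb CR0) simp
      finally have h: "cmod (B (Rop N (us n)) j) \<le> \<bar>CB\<bar> * sqrt (CR * Bd^2)" .
      have "cmod (P (us n) j) \<le> cmod (B (Rop N (us n)) j) + cmod (us n j)"
        using True by (simp add: P_def norm_triangle_ineq4)
      thus ?thesis using h cb[of n j] by (simp add: PB_def)
    next
      case False
      have "0 \<le> CR * Bd^2" using CR0 by simp
      moreover have "0 \<le> Bd^2 / wt mu j" using wt_pos[of mu j] by simp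
      ultimately have "0 \<le> PB j" unfolding PB_def by (intro add_nonneg_nonneg mult_nonneg_nonneg) auto
      thus ?thesis using False by (simp add: P_def)
    qed
    define z where "z n i = (if even i then us n (i div 2) else P (us n) (i div 2))" for n i
    have zb: "bounded (range (\<lambda>n. z n i))" for i
      unfolding bounded_iff
    proof (intro exI ballI)
      fix x assume "x \<in> range (\<lambda>n. z n i)"
      then obtain n where x: "x = z n i" by auto
      show "norm x \<le> max (sqrt (Bd^2 / wt mu (i div 2))) (PB (i div 2))"
        using cb[of n "i div 2"] pb[of n "i div 2"] by (auto simp: x z_def)
    qed
    have "\<exists>r. strict_mono r \<and> (\<forall>i. convergent (\<lambda>n. z (r n) i))" by (rule DIAG) (rule zb)
    then obtain r where r: "strict_mono r" and conv: "\<And>i. convergent (\<lambda>n. z (r n) i)" by blast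
    have cu0: "convergent (\<lambda>n. us (r n) k)" for k
    proof -
      have "(\<lambda>n. z (r n) (2 * k)) = (\<lambda>n. us (r n) k)" by (simp add: z_def)
      thus ?thesis using conv[of "2 * k"] by simp
    qed
    have cp0: "convergent (\<lambda>n. P (us (r n)) j)" for j
    proof -
      have "(\<lambda>n. z (r n) (2 * j + 1)) = (\<lambda>n. P (us (r n)) j)" by (simp add: z_def)
      thus ?thesis using conv[of "2 * j + 1"] by simp
    qed
    define uinf where "uinf k = lim (\<lambda>n. us (r n) k)" for k
    define pinf where "pinf j = lim (\<lambda>n. P (us (r n)) j)" for j
    have cu: "(\<lambda>n. us (r n) k) \<longlonglongrightarrow> uinf k" for k using cu0[of k] by (simp add: convergent_LIMSEQ_iff uinf_def)
    have cp: "(\<lambda>n. P (us (r n)) j) \<longlonglongrightarrow> pinf j" for j using cp0[of j] by (simp add: convergent_LIMSEQ_iff pinf_def)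
    have Fwc: "(\<lambda>n. Fw mu (us (r n)) k) \<longlonglongrightarrow> Fw mu uinf k" for k
      unfolding Fw_def by (intro tendsto_intros cu)
    have finb: "sum (Fw mu uinf) I \<le> Bd^2" if I: "finite I" for I
    proof (rule LIMSEQ_le_const2)
      show "(\<lambda>n. sum (Fw mu (us (r n))) I) \<longlonglongrightarrow> sum (Fw mu uinf) I" by (intro tendsto_sum Fwc)
      show "\<exists>M. \<forall>n\<ge>M. sum (Fw mu (us (r n))) I \<le> Bd^2"
      proof (intro exI allI impI)
        fix n
        have "sum (Fw mu (us (r n))) I \<le> suminf (Fw mu (us (r n)))"
          by (rule sum_le_suminf[OF sum_us I]) (simp add: Fw_nonneg)
        thus "sum (Fw mu (us (r n))) I \<le> Bd^2" using Qb[of "r n"] by linarith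
      qed
    qed
    have uinf_s: "summable (Fw mu uinf)"
      by (rule bounded_imp_summable[OF Fw_nonneg finb]) simp
    have uinf_l2: "in_l2 mu uinf" using uinf_s by (simp add: in_l2_Fw)
    have uinf_b: "suminf (Fw mu uinf) \<le> Bd^2" by (rule suminf_le_const[OF uinf_s finb]) simp
    define vs where "vs n = (\<lambda>k. us (r n) k - uinf k)" for n
    have vs_l2: "in_l2 mu (vs n)" and vs_b: "suminf (Fw mu (vs n)) \<le> 4 * Bd^2" for n
    proof -
      from in_l2_diff[OF l2[rule_format, of "r n"] uinf_l2]
      have h: "in_l2 mu (vs n) \<and> suminf (Fw mu (vs n)) \<le> 2 * suminf (Fw mu (us (r n))) + 2 * suminf (Fw mu uinf)"
        by (simp add: vs_def)
      thus "in_l2 mu (vs n)" by blast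
      show "suminf (Fw mu (vs n)) \<le> 4 * Bd^2" using h Qb[of "r n"] uinf_b by linarith
    qed
    have vs_c: "(\<lambda>n. vs n k) \<longlonglongrightarrow> 0" for k
    proof -
      have "(\<lambda>n. us (r n) k - uinf k) \<longlonglongrightarrow> uinf k - uinf k" by (intro tendsto_intros cu)
      thus ?thesis by (simp add: vs_def)
    qed
    have Lvs: "(\<lambda>n. suminf (Fw mu (Lp (vs n)))) \<longlonglongrightarrow> 0"
      by (rule CCo_seq[OF Lp_CCo vs_l2 vs_b vs_c])
    define w where "w = (\<lambda>j. (if j < N then pinf j else 0) + Lp uinf j)"
    have w_l2: "in_l2 mu w"
    proof -
      have "in_l2 mu (\<lambda>j. if j < N then pinf j else 0)" using in_l2_fin[of N "\<lambda>j. if j < N then pinf j else 0" mu] by simp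
      from in_l2_add[OF this Lp_l2[OF uinf_l2]] show ?thesis by (simp add: w_def)
    qed
    define A where "A n = (\<lambda>k. P (us (r n)) k - (if k < N then pinf k else 0))" for n
    have A_fin: "\<And>j. N \<le> j \<Longrightarrow> A n j = 0" for n by (simp add: A_def P_def)
    have A_t: "(\<lambda>n. suminf (Fw mu (A n))) \<longlonglongrightarrow> 0"
    proof -
      have e: "suminf (Fw mu (A n)) = (\<Sum>j<N. Fw mu (A n) j)" for n using in_l2_fin[of N "A n" mu] A_fin by blast
      have "(\<lambda>n. Fw mu (A n) j) \<longlonglongrightarrow> 0" if j: "j < N" for j
      proof -
        have "(\<lambda>n. A n j) \<longlonglongrightarrow> pinf j - pinf j" using j unfolding A_def by (intro tendsto_intros cp) auto
        hence "(\<lambda>n. A n j) \<longlonglongrightarrow> 0" by simp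
        thus ?thesis by (rule Fw_tendsto0)
      qed
      hence "(\<lambda>n. \<Sum>j<N. Fw mu (A n) j) \<longlonglongrightarrow> (\<Sum>j<N. 0)" by (intro tendsto_sum) auto
      thus ?thesis by (simp add: e)
    qed
    have diff: "(\<lambda>k. K (us (r n)) k - w k) = (\<lambda>k. A n k + Lp (vs n) k)" for n
    proof -
      have "Lp (vs n) = (\<lambda>k. Lp (us (r n)) k - Lp uinf k)" unfolding vs_def by (rule lin_diff[OF Lp_lin])
      thus ?thesis by (simp add: Kdec A_def w_def algebra_simps)
    qed
    have A_l2: "in_l2 mu (A n)" for n using in_l2_fin[of N "A n" mu] A_fin by blast
    have Lvs_l2: "in_l2 mu (Lp (vs n))" for n by (rule Lp_l2[OF vs_l2])
    have S_le: "suminf (Fw mu (\<lambda>k. A n k + Lp (vs n) k)) \<le> 2 * suminf (Fw mu (A n)) + 2 * suminf (Fw mu (Lp (vs n)))"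
      and S_s: "summable (Fw mu (\<lambda>k. A n k + Lp (vs n) k))" for n
      using in_l2_add[OF A_l2 Lvs_l2] by (auto simp: in_l2_Fw)
    have S0: "0 \<le> suminf (Fw mu (\<lambda>k. A n k + Lp (vs n) k))" for n by (intro suminf_nonneg S_s Fw_nonneg)
    have lim2: "(\<lambda>n. 2 * suminf (Fw mu (A n)) + 2 * suminf (Fw mu (Lp (vs n)))) \<longlonglongrightarrow> 2 * 0 + 2 * 0"
      by (intro tendsto_intros A_t Lvs)
    have "(\<lambda>n. suminf (Fw mu (\<lambda>k. A n k + Lp (vs n) k))) \<longlonglongrightarrow> 0"
    proof (rule tendsto_sandwich[of "\<lambda>_. 0" _ _ "\<lambda>n. 2 * suminf (Fw mu (A n)) + 2 * suminf (Fw mu (Lp (vs n)))"])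
      show "\<forall>\<^sub>F n in sequentially. 0 \<le> suminf (Fw mu (\<lambda>k. A n k + Lp (vs n) k))" by (simp add: S0)
      show "\<forall>\<^sub>F n in sequentially. suminf (Fw mu (\<lambda>k. A n k + Lp (vs n) k)) \<le> 2 * suminf (Fw mu (A n)) + 2 * suminf (Fw mu (Lp (vs n)))"
        by (simp add: S_le)
      show "(\<lambda>n. 2 * suminf (Fw mu (A n)) + 2 * suminf (Fw mu (Lp (vs n)))) \<longlonglongrightarrow> 0" using lim2 by simp
    qed simp
    hence "(\<lambda>n. sqrt (suminf (Fw mu (\<lambda>k. A n k + Lp (vs n) k)))) \<longlonglongrightarrow> sqrt 0" by (intro tendsto_intros)
    hence "(\<lambda>n. l2norm mu (\<lambda>k. K (us (r n)) k - w k)) \<longlonglongrightarrow> 0" by (simp add: diff l2norm_Fw)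
    thus "\<exists>r w. strict_mono r \<and> in_l2 mu w \<and> (\<lambda>n. l2norm mu (\<lambda>k. K (us (r n)) k - w k)) \<longlonglongrightarrow> 0"
      using r w_l2 by blast
  qed
  thus "compact_op_l2 (of_int lam) (\<lambda>u k. blockop N B (Lop N a) (Rop N u) k - u k)"
    by (simp add: mu_def K_def)
qed


end
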